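(* Under the setting of Theorem 7 (i.i.d. $X_i$ with mean $\mu_0$, $\|X_1\|\le\tau$ a.s., $c_1j^{-\beta}\le\lambda_j\le c_2j^{-\beta}$ with $\beta>1$, $\mu_0\in\mathcal{H}_{C^\eta}$, and the private estimators FRL and ICLP-QR as defined there), fix $\epsilon>0$. (1) (FRL) If $\eta>1+\beta^{-1}$ and $M=M_n$ are integers with $a\,n^{1/(\eta\beta)}\le M_n\le b\,n^{1/3}$ for constants $a,b>0$, then $\sup_n n\,\mathbb{E}\|\tilde\mu-\mu_0\|_{\mathbb{H}}^2<\infty$. (2) (ICLP-QR) If $\eta\ge1+2\beta^{-1}$ and $\psi=\psi_n\in(0,1]$ satisfies $a(n\epsilon^2)^{-\eta\beta/(\beta+2)}\le\psi_n\le b\,n^{-1}$ for constants $a,b>0$, then $\sup_n n\,\mathbb{E}\|\tilde\mu-\mu_0\|_{\mathbb{H}}^2<\infty$. Moreover, if $\eta>1+2\beta^{-1}$ and $\psi_n=n^{-1}$, then $n\,\mathbb{E}\|\tilde\mu-\hat\mu^{QR}\|_{\mathbb{H}}^2\to0$ as $n\to\infty$.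
   Context: $\mathbb{H}$ is a real separable infinite-dimensional Hilbert space; $C$ a covariance operator with eigenvalues $\lambda_1\ge\lambda_2\ge\dots>0$ and orthonormal eigenbasis $\{\phi_j\}$; $h_j=\langle h,\phi_j\rangle$; $\|h\|_{C^\eta}=(\sum_jh_j^2/\lambda_j^\eta)^{1/2}$, $\mathcal{H}_{C^\eta}=\{h:\|h\|_{C^\eta}<\infty\}$. FRL estimator: $\tilde\mu=\sum_{j=1}^M(\langle\bar X,\phi_j\rangle+W_j)\phi_j$ with $W_j$ i.i.d. with density $\frac1{2b}e^{-|w|/b}$, $b=2M\tau/(n\epsilon)$. ICLP-QR estimator: $\hat\mu^{QR}=\sum_j\frac{\lambda_j^\eta}{\lambda_j^\eta+\psi}\langle\bar X,\phi_j\rangle\phi_j$ and $\tilde\mu=\hat\mu^{QR}+\sigma Z$ with $\sigma=\sqrt2\Delta_{QR}/\epsilon$, $\Delta_{QR}=\frac{2\tau}{n}\sum_j\frac{\lambda_j^{\eta-1/2}}{\lambda_j^\eta+\psi}$, and $Z=\sum_j\sqrt{\lambda_j}Z_j\phi_j$ with $Z_j$ i.i.d. Laplace of mean 0 and variance 1, independent of the data. $\bar X=\frac1n\sum_iX_i$. *)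

theory Defs
  imports "HOL-Probability.Probability"
begin

text \<open>Laplace density with mean 0 and scale s: exp(-|x|/s)/(2s).
  Scale 1/sqrt 2 gives variance 1.\<close>
definition laplace_density :: "real \<Rightarrow> real \<Rightarrow> real" where
  "laplace_density s x = exp (- \<bar>x\<bar> / s) / (2 * s)"

text \<open>Orthonormal basis of the Hilbert space, indexed by nat (index j here = index j+1 in the paper).\<close>
definition orthonormal_basis :: "(nat \<Rightarrow> 'a::real_inner) \<Rightarrow> bool" where
  "orthonormal_basis \<phi> \<longleftrightarrow>
     (\<forall>i j. \<phi> i \<bullet> \<phi> j = (if i = j then 1 else 0)) \<and>
     (\<forall>h. (\<lambda>N. \<Sum>j<N. (h \<bullet> \<phi> j) *\<^sub>R \<phi> j) \<longlonglongrightarrow> h)"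

definition in_H_C_pow :: "(nat \<Rightarrow> real) \<Rightarrow> (nat \<Rightarrow> 'a::real_inner) \<Rightarrow> real \<Rightarrow> 'a \<Rightarrow> bool" where
  "in_H_C_pow lam \<phi> \<eta> h \<longleftrightarrow> summable (\<lambda>j. (h \<bullet> \<phi> j)\<^sup>2 / lam j powr \<eta>)"

definition Xbar :: "(nat \<Rightarrow> 'w \<Rightarrow> 'a::real_normed_vector) \<Rightarrow> nat \<Rightarrow> 'w \<Rightarrow> 'a" where
  "Xbar X n \<omega> = (1 / real n) *\<^sub>R (\<Sum>i<n. X i \<omega>)"

text \<open>FRL estimator with truncation level Mn; W0 are standard (scale 1) Laplace variables,
  so b * W0 j has density exp(-|w|/b)/(2b) with b = 2 Mn tau/(n eps).\<close>
definition frl_est :: "(nat \<Rightarrow> 'a::real_inner) \<Rightarrow> real \<Rightarrow> real \<Rightarrow> (nat \<Rightarrow> 'w \<Rightarrow> 'a)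
    \<Rightarrow> (nat \<Rightarrow> 'w \<Rightarrow> real) \<Rightarrow> nat \<Rightarrow> nat \<Rightarrow> 'w \<Rightarrow> 'a" where
  "frl_est \<phi> \<tau> \<epsilon> X W0 n Mn \<omega> =
     (\<Sum>j<Mn. ((Xbar X n \<omega> \<bullet> \<phi> j) + (2 * real Mn * \<tau> / (real n * \<epsilon>)) * W0 j \<omega>) *\<^sub>R \<phi> j)"

definition qr_est :: "(nat \<Rightarrow> real) \<Rightarrow> (nat \<Rightarrow> 'a::{real_inner}) \<Rightarrow> real \<Rightarrow> real
    \<Rightarrow> (nat \<Rightarrow> 'w \<Rightarrow> 'a) \<Rightarrow> nat \<Rightarrow> 'w \<Rightarrow> 'a" where
  "qr_est lam \<phi> \<eta> \<psi> X n \<omega> =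
     (\<Sum>j. (lam j powr \<eta> / (lam j powr \<eta> + \<psi>) * (Xbar X n \<omega> \<bullet> \<phi> j)) *\<^sub>R \<phi> j)"

definition delta_qr :: "(nat \<Rightarrow> real) \<Rightarrow> real \<Rightarrow> real \<Rightarrow> real \<Rightarrow> nat \<Rightarrow> real" where
  "delta_qr lam \<eta> \<psi> \<tau> n =
     2 * \<tau> / real n * (\<Sum>j. lam j powr (\<eta> - 1/2) / (lam j powr \<eta> + \<psi>))"

definition iclp_noise :: "(nat \<Rightarrow> real) \<Rightarrow> (nat \<Rightarrow> 'a::real_inner) \<Rightarrow> (nat \<Rightarrow> 'w \<Rightarrow> real) \<Rightarrow> 'w \<Rightarrow> 'a" where
  "iclp_noise lam \<phi> Z \<omega> = (\<Sum>j. (sqrt (lam j) * Z j \<omega>) *\<^sub>R \<phi> j)"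

definition iclp_qr_est :: "(nat \<Rightarrow> real) \<Rightarrow> (nat \<Rightarrow> 'a::real_inner) \<Rightarrow> real \<Rightarrow> real \<Rightarrow> real \<Rightarrow> real
    \<Rightarrow> (nat \<Rightarrow> 'w \<Rightarrow> 'a) \<Rightarrow> (nat \<Rightarrow> 'w \<Rightarrow> real) \<Rightarrow> nat \<Rightarrow> 'w \<Rightarrow> 'a" where
  "iclp_qr_est lam \<phi> \<eta> \<psi> \<tau> \<epsilon> X Z n \<omega> =
     qr_est lam \<phi> \<eta> \<psi> X n \<omega> + (sqrt 2 * delta_qr lam \<eta> \<psi> \<tau> n / \<epsilon>) *\<^sub>R iclp_noise lam \<phi> Z \<omega>"

definition indep_processes :: "'w measure \<Rightarrow> (nat \<Rightarrow> 'w \<Rightarrow> 'b::topological_space)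
    \<Rightarrow> (nat \<Rightarrow> 'w \<Rightarrow> 'c::topological_space) \<Rightarrow> bool" where
  "indep_processes M X Y \<longleftrightarrow>
     prob_space.indep_set M
       (sets (vimage_algebra (space M) (\<lambda>\<omega> i. X i \<omega>) (Pi\<^sub>M UNIV (\<lambda>_. borel))))
       (sets (vimage_algebra (space M) (\<lambda>\<omega> j. Y j \<omega>) (Pi\<^sub>M UNIV (\<lambda>_. borel))))"

end

theory Submission
  imports Defs "HOL-Analysis.Summation_Tests"
begin

lemma onb_inner: "orthonormal_basis \<phi> \<Longrightarrow> \<phi> i \<bullet> \<phi> j = (if i = j then 1 else 0)"
  unfolding orthonormal_basis_def by blast

lemma onb_lim: "orthonormal_basis \<phi> \<Longrightarrow> (\<lambda>N. \<Sum>j<N. (h \<bullet> \<phi> j) *\<^sub>R \<phi> j) \<longlonglongrightarrow> h"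
  unfolding orthonormal_basis_def by blast

lemma onb_finsum_inner:
  assumes "orthonormal_basis \<phi>"
  shows "(\<Sum>j\<in>A. c j *\<^sub>R \<phi> j) \<bullet> \<phi> k = (if k \<in> A \<and> finite A then c k else 0)"
proof (cases "finite A")
  case True
  have "(\<Sum>j\<in>A. c j *\<^sub>R \<phi> j) \<bullet> \<phi> k = (\<Sum>j\<in>A. c j * (if j = k then 1 else 0))"
    by (simp add: inner_sum_left onb_inner[OF assms])
  also have "\<dots> = (if k \<in> A then c k else 0)"
    using True by (simp add: if_distrib sum.delta cong: if_cong)
  finally show ?thesis using True by simp
qed simp

lemma onb_finsum_norm:
  assumes "orthonormal_basis \<phi>" "finite A"
  shows "(norm (\<Sum>j\<in>A. c j *\<^sub>R \<phi> j))\<^sup>2 = (\<Sum>j\<in>A. (c j)\<^sup>2)"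
proof -
  have "(norm (\<Sum>j\<in>A. c j *\<^sub>R \<phi> j))\<^sup>2 = (\<Sum>j\<in>A. c j *\<^sub>R \<phi> j) \<bullet> (\<Sum>k\<in>A. c k *\<^sub>R \<phi> k)"
    by (simp add: power2_norm_eq_inner)
  also have "\<dots> = (\<Sum>k\<in>A. c k * ((\<Sum>j\<in>A. c j *\<^sub>R \<phi> j) \<bullet> \<phi> k))"
    by (simp add: inner_sum_right)
  also have "\<dots> = (\<Sum>k\<in>A. (c k)\<^sup>2)"
    by (intro sum.cong refl) (simp add: onb_finsum_inner[OF assms(1)] assms(2) power2_eq_square)
  finally show ?thesis .
qed

lemma onb_parseval:
  assumes "orthonormal_basis \<phi>"
  shows "(\<lambda>j. (h \<bullet> \<phi> j)\<^sup>2) sums (norm h)\<^sup>2"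
proof -
  have "(\<lambda>N. (norm (\<Sum>j<N. (h \<bullet> \<phi> j) *\<^sub>R \<phi> j))\<^sup>2) \<longlonglongrightarrow> (norm h)\<^sup>2"
    by (intro tendsto_intros onb_lim[OF assms])
  then show ?thesis unfolding sums_def by (simp add: onb_finsum_norm[OF assms])
qed

lemma onb_synth:
  fixes \<phi> :: "nat \<Rightarrow> 'a::{real_inner,banach}"
  assumes onb: "orthonormal_basis \<phi>" and s: "summable (\<lambda>j. (c j)\<^sup>2)"
  shows "summable (\<lambda>j. c j *\<^sub>R \<phi> j)" and "\<And>k. (\<Sum>j. c j *\<^sub>R \<phi> j) \<bullet> \<phi> k = c k"
    and "(norm (\<Sum>j. c j *\<^sub>R \<phi> j))\<^sup>2 = (\<Sum>j. (c j)\<^sup>2)"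
proof -
  show sm: "summable (\<lambda>j. c j *\<^sub>R \<phi> j)"
    unfolding summable_Cauchy
  proof (intro allI impI)
    fix e :: real assume "e > 0"
    then have "e\<^sup>2 > 0" by simp
    from s[unfolded summable_Cauchy, rule_format, OF this] obtain N where
      N: "\<And>m n. m \<ge> N \<Longrightarrow> norm (\<Sum>j\<in>{m..<n}. (c j)\<^sup>2) < e\<^sup>2" by blast
    show "\<exists>N. \<forall>m\<ge>N. \<forall>n. norm (\<Sum>j\<in>{m..<n}. c j *\<^sub>R \<phi> j) < e"
    proof (intro exI allI impI)
      fix m n assume "m \<ge> N"
      have "(norm (\<Sum>j\<in>{m..<n}. c j *\<^sub>R \<phi> j))\<^sup>2 = (\<Sum>j\<in>{m..<n}. (c j)\<^sup>2)"
        by (rule onb_finsum_norm[OF onb]) simp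
      also have "\<dots> < e\<^sup>2" using N[OF \<open>m \<ge> N\<close>, of n] by simp
      finally show "norm (\<Sum>j\<in>{m..<n}. c j *\<^sub>R \<phi> j) < e"
        using \<open>e > 0\<close> by (meson norm_ge_zero power_less_imp_less_base less_imp_le)
    qed
  qed
  show inn: "(\<Sum>j. c j *\<^sub>R \<phi> j) \<bullet> \<phi> k = c k" for k
  proof -
    have "(\<lambda>j. (c j *\<^sub>R \<phi> j) \<bullet> \<phi> k) sums ((\<Sum>j. c j *\<^sub>R \<phi> j) \<bullet> \<phi> k)"
      by (intro bounded_linear.sums[OF bounded_linear_inner_left] summable_sums sm)
    moreover have "(\<lambda>j. (c j *\<^sub>R \<phi> j) \<bullet> \<phi> k) = (\<lambda>j. if j = k then c j else 0)"
      by (auto simp: onb_inner[OF onb])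
    ultimately show ?thesis using sums_single[of k c] sums_unique2 by metis
  qed
  show "(norm (\<Sum>j. c j *\<^sub>R \<phi> j))\<^sup>2 = (\<Sum>j. (c j)\<^sup>2)"
    using onb_parseval[OF onb, of "\<Sum>j. c j *\<^sub>R \<phi> j"] by (simp add: inn sums_iff)
qed

lemma onb_parseval_enn:
  assumes "orthonormal_basis \<phi>"
  shows "ennreal ((norm h)\<^sup>2) = (\<Sum>j. ennreal ((h \<bullet> \<phi> j)\<^sup>2))"
proof -
  have "(\<lambda>j. ennreal ((h \<bullet> \<phi> j)\<^sup>2)) sums ennreal ((norm h)\<^sup>2)"
    using onb_parseval[OF assms, of h] by (subst sums_ennreal) auto
  then show ?thesis by (simp add: sums_iff)
qed

lemma (in prob_space) sum_sq_indep:
  fixes Y :: "nat \<Rightarrow> 'a \<Rightarrow> real"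
  assumes ind: "indep_vars (\<lambda>_. borel) Y UNIV"
    and int: "\<And>i. integrable M (Y i)" and int2: "\<And>i k. integrable M (\<lambda>\<omega>. Y i \<omega> * Y k \<omega>)"
    and mean: "\<And>i. (\<integral>\<omega>. Y i \<omega> \<partial>M) = 0"
  shows "(\<integral>\<omega>. (\<Sum>i<n. Y i \<omega>)\<^sup>2 \<partial>M) = (\<Sum>i<n. \<integral>\<omega>. (Y i \<omega>)\<^sup>2 \<partial>M)"
proof -
  have cross: "(\<integral>\<omega>. Y i \<omega> * Y k \<omega> \<partial>M) = 0" if "i \<noteq> k" for i k
  proof -
    have "indep_vars (\<lambda>_. borel) Y (insert i {k})"
      by (rule indep_vars_subset[OF ind]) auto
    from indep_vars_sum[OF _ _ this] that
    have "indep_var borel (Y i) borel (\<lambda>\<omega>. \<Sum>i\<in>{k}. Y i \<omega>)" by simp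
    then have "indep_var borel (Y i) borel (Y k)" by simp
    from indep_var_lebesgue_integral[OF this int int] show ?thesis by (simp add: mean)
  qed
  have "(\<integral>\<omega>. (\<Sum>i<n. Y i \<omega>)\<^sup>2 \<partial>M) = (\<integral>\<omega>. (\<Sum>i<n. \<Sum>k<n. Y i \<omega> * Y k \<omega>) \<partial>M)"
    by (simp add: power2_eq_square sum_product)
  also have "\<dots> = (\<Sum>i<n. \<Sum>k<n. \<integral>\<omega>. Y i \<omega> * Y k \<omega> \<partial>M)"
    by (simp add: int2)
  also have "\<dots> = (\<Sum>i<n. \<Sum>k<n. if k = i then \<integral>\<omega>. (Y i \<omega>)\<^sup>2 \<partial>M else 0)"
    by (intro sum.cong refl) (auto simp: cross power2_eq_square)
  also have "\<dots> = (\<Sum>i<n. \<integral>\<omega>. (Y i \<omega>)\<^sup>2 \<partial>M)"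
    by simp
  finally show ?thesis .
qed

lemma norm_onb: "orthonormal_basis \<phi> \<Longrightarrow> norm (\<phi> j) = 1"
  using onb_inner[of \<phi> j j] by (simp add: norm_eq_sqrt_inner)

lemma abs_inner_onb: "orthonormal_basis \<phi> \<Longrightarrow> \<bar>v \<bullet> \<phi> j\<bar> \<le> norm v"
  using Cauchy_Schwarz_ineq2[of v "\<phi> j"] norm_onb[of \<phi> j] by simp

lemma (in prob_space) xbar_var:
  fixes X :: "nat \<Rightarrow> 'a \<Rightarrow> 'b::{real_inner, banach, second_countable_topology}"
    and \<phi> :: "nat \<Rightarrow> 'b"
  assumes onb: "orthonormal_basis \<phi>"
    and X_rv[measurable]: "\<And>i. X i \<in> borel_measurable M"
    and X_indep: "indep_vars (\<lambda>_. borel) X UNIV"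
    and X_ident: "\<And>i. distr M borel (X i) = distr M borel (X 0)"
    and X_int: "integrable M (X 0)"
    and X_mean: "(\<integral>\<omega>. X 0 \<omega> \<partial>M) = \<mu>0"
    and X_bdd: "AE \<omega> in M. norm (X 0 \<omega>) \<le> \<tau>"
    and n: "n \<ge> 1"
  shows "(\<integral>\<^sup>+\<omega>. ennreal ((norm (Xbar X n \<omega> - \<mu>0))\<^sup>2) \<partial>M) \<le> ennreal (4 * \<tau>\<^sup>2 / real n)"
proof -
  have bdd: "AE \<omega> in M. norm (X i \<omega>) \<le> \<tau>" for i
  proof -
    have "AE x in distr M borel (X 0). norm x \<le> \<tau>" using X_bdd by (subst AE_distr_iff) auto
    hence "AE x in distr M borel (X i). norm x \<le> \<tau>" by (subst X_ident)
    thus ?thesis by (subst (asm) AE_distr_iff) auto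
  qed
  have idm: "(\<lambda>x::'b. x) \<in> borel_measurable borel" by simp
  have int: "integrable M (X i)" for i
  proof -
    have "integrable (distr M borel (X 0)) (\<lambda>x. x)"
      using integrable_distr_eq[OF X_rv idm] X_int by (simp only:)
    hence "integrable (distr M borel (X i)) (\<lambda>x. x)" by (subst X_ident)
    thus ?thesis using integrable_distr_eq[OF X_rv idm] by (simp only:)
  qed
  have mean: "(\<integral>\<omega>. X i \<omega> \<partial>M) = \<mu>0" for i
  proof -
    have "(\<integral>\<omega>. X i \<omega> \<partial>M) = integral\<^sup>L (distr M borel (X i)) (\<lambda>x. x)"
      using integral_distr[OF X_rv idm] by (simp only:)
    also have "\<dots> = integral\<^sup>L (distr M borel (X 0)) (\<lambda>x. x)" by (subst X_ident) (rule refl)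
    also have "\<dots> = \<mu>0" using integral_distr[OF X_rv idm] X_mean by (simp only:)
    finally show ?thesis .
  qed
  have mu_bd: "norm \<mu>0 \<le> \<tau>"
  proof -
    have "norm \<mu>0 \<le> (\<integral>\<omega>. norm (X 0 \<omega>) \<partial>M)" using integral_norm_bound X_mean by metis
    also have "\<dots> \<le> (\<integral>\<omega>. \<tau> \<partial>M)"
      by (rule integral_mono_AE) (use X_bdd int in auto)
    also have "\<dots> = \<tau>" by (simp add: prob_space)
    finally show ?thesis .
  qed
  have tau0: "0 \<le> \<tau>" using mu_bd norm_ge_zero order_trans by blast
  have bdd2: "AE \<omega> in M. norm (X i \<omega> - \<mu>0) \<le> 2 * \<tau>" for i
    using bdd[of i]
  proof eventually_elim
    case (elim \<omega>)
    have "norm (X i \<omega> - \<mu>0) \<le> norm (X i \<omega>) + norm \<mu>0" by (rule norm_triangle_ineq4)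
    then show ?case using elim mu_bd by linarith
  qed
  define Y where "Y j i \<omega> = (X i \<omega> - \<mu>0) \<bullet> \<phi> j" for j i \<omega>
  have Y_meas[measurable]: "Y j i \<in> borel_measurable M" for j i unfolding Y_def by measurable
  have Ybd: "AE \<omega> in M. \<bar>Y j i \<omega>\<bar> \<le> 2 * \<tau>" for j i
    using bdd2[of i] by eventually_elim (metis Y_def abs_inner_onb[OF onb] order_trans)
  have Yint: "integrable M (Y j i)" for j i
    unfolding Y_def by (intro integrable_inner_left Bochner_Integration.integrable_diff int) auto
  have Y2int: "integrable M (\<lambda>\<omega>. Y j i \<omega> * Y j k \<omega>)" for j i k
  proof (rule Bochner_Integration.integrable_bound[OF integrable_const[of "4 * \<tau>\<^sup>2"]])
    show "AE \<omega> in M. norm (Y j i \<omega> * Y j k \<omega>) \<le> norm (4 * \<tau>\<^sup>2)"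
      using Ybd[of j i] Ybd[of j k]
    proof eventually_elim
      case (elim \<omega>)
      have "\<bar>Y j i \<omega> * Y j k \<omega>\<bar> \<le> (2 * \<tau>) * (2 * \<tau>)"
        unfolding abs_mult by (intro mult_mono elim) (use tau0 in auto)
      then show ?case by (simp add: power2_eq_square)
    qed
  qed auto
  have mean0: "(\<integral>\<omega>. Y j i \<omega> \<partial>M) = 0" for j i
  proof -
    have "(\<integral>\<omega>. Y j i \<omega> \<partial>M) = (\<integral>\<omega>. (X i \<omega> - \<mu>0) \<partial>M) \<bullet> \<phi> j"
      unfolding Y_def by (intro integral_inner_left Bochner_Integration.integrable_diff int) auto
    also have "(\<integral>\<omega>. (X i \<omega> - \<mu>0) \<partial>M) = 0"
      using int[of i] by (simp add: mean prob_space)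
    finally show ?thesis by simp
  qed
  have Yind: "indep_vars (\<lambda>_. borel) (Y j) UNIV" for j
    unfolding Y_def by (rule indep_vars_compose2[OF X_indep]) auto
  have coeff: "(Xbar X n \<omega> - \<mu>0) \<bullet> \<phi> j = (1 / real n) * (\<Sum>i<n. Y j i \<omega>)" for j \<omega>
    using n by (simp add: Xbar_def Y_def inner_diff_left inner_sum_left sum_subtractf field_simps)
  have var: "(\<integral>\<^sup>+\<omega>. ennreal (((Xbar X n \<omega> - \<mu>0) \<bullet> \<phi> j)\<^sup>2) \<partial>M)
      = ennreal ((1 / real n)\<^sup>2) * (\<Sum>i<n. \<integral>\<^sup>+\<omega>. ennreal ((Y j i \<omega>)\<^sup>2) \<partial>M)" for j
  proof -
    have i1: "integrable M (\<lambda>\<omega>. (\<Sum>i<n. Y j i \<omega>)\<^sup>2)"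
      by (simp add: power2_eq_square sum_product Y2int)
    have "(\<integral>\<^sup>+\<omega>. ennreal (((Xbar X n \<omega> - \<mu>0) \<bullet> \<phi> j)\<^sup>2) \<partial>M)
        = (\<integral>\<^sup>+\<omega>. ennreal ((1 / real n)\<^sup>2 * (\<Sum>i<n. Y j i \<omega>)\<^sup>2) \<partial>M)"
      by (simp add: coeff power_mult_distrib power_divide)
    also have "\<dots> = ennreal (\<integral>\<omega>. (1 / real n)\<^sup>2 * (\<Sum>i<n. Y j i \<omega>)\<^sup>2 \<partial>M)"
      by (intro nn_integral_eq_integral) (use i1 in auto)
    also have "\<dots> = ennreal ((1 / real n)\<^sup>2 * (\<Sum>i<n. \<integral>\<omega>. (Y j i \<omega>)\<^sup>2 \<partial>M))"
      by (simp add: sum_sq_indep[OF Yind Yint Y2int mean0])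
    also have "\<dots> = ennreal ((1 / real n)\<^sup>2) * (\<Sum>i<n. ennreal (\<integral>\<omega>. (Y j i \<omega>)\<^sup>2 \<partial>M))"
      by (simp add: ennreal_mult sum_nonneg)
    also have "(\<Sum>i<n. ennreal (\<integral>\<omega>. (Y j i \<omega>)\<^sup>2 \<partial>M)) = (\<Sum>i<n. \<integral>\<^sup>+\<omega>. ennreal ((Y j i \<omega>)\<^sup>2) \<partial>M)"
      by (intro sum.cong refl nn_integral_eq_integral[symmetric]) (use Y2int in \<open>auto simp: power2_eq_square\<close>)
    finally show ?thesis .
  qed
  have "(\<integral>\<^sup>+\<omega>. ennreal ((norm (Xbar X n \<omega> - \<mu>0))\<^sup>2) \<partial>M)
      = (\<integral>\<^sup>+\<omega>. (\<Sum>j. ennreal (((Xbar X n \<omega> - \<mu>0) \<bullet> \<phi> j)\<^sup>2)) \<partial>M)"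
    by (simp add: onb_parseval_enn[OF onb])
  also have "\<dots> = (\<Sum>j. \<integral>\<^sup>+\<omega>. ennreal (((Xbar X n \<omega> - \<mu>0) \<bullet> \<phi> j)\<^sup>2) \<partial>M)"
    by (intro nn_integral_suminf) (auto simp: Xbar_def)
  also have "\<dots> = ennreal ((1 / real n)\<^sup>2) * (\<Sum>j. \<Sum>i<n. \<integral>\<^sup>+\<omega>. ennreal ((Y j i \<omega>)\<^sup>2) \<partial>M)"
    by (simp add: var)
  also have "(\<Sum>j. \<Sum>i<n. \<integral>\<^sup>+\<omega>. ennreal ((Y j i \<omega>)\<^sup>2) \<partial>M) = (\<Sum>i<n. \<Sum>j. \<integral>\<^sup>+\<omega>. ennreal ((Y j i \<omega>)\<^sup>2) \<partial>M)"
    by (intro suminf_sum summableI)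
  also have "\<dots> = (\<Sum>i<n. \<integral>\<^sup>+\<omega>. ennreal ((norm (X i \<omega> - \<mu>0))\<^sup>2) \<partial>M)"
  proof (intro sum.cong refl)
    fix i
    have "(\<Sum>j. \<integral>\<^sup>+\<omega>. ennreal ((Y j i \<omega>)\<^sup>2) \<partial>M) = (\<integral>\<^sup>+\<omega>. (\<Sum>j. ennreal ((Y j i \<omega>)\<^sup>2)) \<partial>M)"
      by (intro nn_integral_suminf[symmetric]) auto
    also have "\<dots> = (\<integral>\<^sup>+\<omega>. ennreal ((norm (X i \<omega> - \<mu>0))\<^sup>2) \<partial>M)"
      by (simp add: onb_parseval_enn[OF onb] Y_def)
    finally show "(\<Sum>j. \<integral>\<^sup>+\<omega>. ennreal ((Y j i \<omega>)\<^sup>2) \<partial>M) = (\<integral>\<^sup>+\<omega>. ennreal ((norm (X i \<omega> - \<mu>0))\<^sup>2) \<partial>M)" .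
  qed
  also have "\<dots> \<le> (\<Sum>i<n. \<integral>\<^sup>+\<omega>. ennreal (4 * \<tau>\<^sup>2) \<partial>M)"
  proof (intro sum_mono nn_integral_mono_AE)
    fix i
    show "AE \<omega> in M. ennreal ((norm (X i \<omega> - \<mu>0))\<^sup>2) \<le> ennreal (4 * \<tau>\<^sup>2)"
      using bdd2[of i]
    proof eventually_elim
      case (elim \<omega>)
      have "(norm (X i \<omega> - \<mu>0))\<^sup>2 \<le> (2 * \<tau>)\<^sup>2" by (intro power_mono elim) auto
      then show ?case by (intro ennreal_leI) (simp add: power_mult_distrib)
    qed
  qed
  also have "\<dots> = ennreal (real n * (4 * \<tau>\<^sup>2))"
    by (simp add: emeasure_space_1 ennreal_of_nat_eq_real_of_nat ennreal_mult)
  finally have "(\<integral>\<^sup>+\<omega>. ennreal ((norm (Xbar X n \<omega> - \<mu>0))\<^sup>2) \<partial>M)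
      \<le> ennreal ((1 / real n)\<^sup>2) * ennreal (real n * (4 * \<tau>\<^sup>2))"
    by (simp add: mult_left_mono)
  also have "\<dots> = ennreal ((1 / real n)\<^sup>2 * (real n * (4 * \<tau>\<^sup>2)))"
    by (rule ennreal_mult[symmetric]) auto
  also have "\<dots> = ennreal (4 * \<tau>\<^sup>2 / real n)"
    by (rule arg_cong[where f=ennreal]) (use n in \<open>simp add: field_simps power2_eq_square\<close>)
  finally show ?thesis .
qed

lemma laplace_second_moment:
  fixes W :: "'w \<Rightarrow> real"
  assumes s: "s > 0" and d: "distributed M lborel W (\<lambda>x. ennreal (laplace_density s x))"
  shows "(\<integral>\<^sup>+\<omega>. ennreal ((W \<omega>)\<^sup>2) \<partial>M) \<le> ennreal (2 * s\<^sup>2)"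
proof -
  define h where "h x = erlang_density 0 (1/s) x * x ^ 2 / 2" for x
  have hm[measurable]: "h \<in> borel_measurable borel" unfolding h_def erlang_density_def by measurable
  have h0: "0 \<le> h x" for x unfolding h_def erlang_density_def using s by auto
  have "(\<integral>\<^sup>+\<omega>. ennreal ((W \<omega>)\<^sup>2) \<partial>M) = (\<integral>\<^sup>+x. ennreal (laplace_density s x) * ennreal (x\<^sup>2) \<partial>lborel)"
    by (rule distributed_nn_integral[OF d, symmetric]) auto
  also have "\<dots> \<le> (\<integral>\<^sup>+x. (ennreal (h x) + ennreal (h (- x))) \<partial>lborel)"
  proof (intro nn_integral_mono)
    fix x :: real
    have "laplace_density s x * x\<^sup>2 \<le> h x + h (- x)"
    proof (cases "x \<ge> 0")
      case True
      then have "h x = laplace_density s x * x\<^sup>2" using s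
        by (simp add: h_def erlang_density_def laplace_density_def field_simps)
      moreover have "0 \<le> h (- x)" by (rule h0)
      ultimately show ?thesis by simp
    next
      case False
      then have "h (- x) = laplace_density s x * x\<^sup>2" using s
        by (simp add: h_def erlang_density_def laplace_density_def field_simps)
      moreover have "0 \<le> h x" by (rule h0)
      ultimately show ?thesis by simp
    qed
    moreover have "0 \<le> laplace_density s x" using s by (simp add: laplace_density_def)
    ultimately show "ennreal (laplace_density s x) * ennreal (x\<^sup>2) \<le> ennreal (h x) + ennreal (h (- x))"
      by (simp add: ennreal_mult[symmetric] ennreal_plus[symmetric] h0 del: ennreal_plus)
  qed
  also have "\<dots> = (\<integral>\<^sup>+x. ennreal (h x) \<partial>lborel) + (\<integral>\<^sup>+x. ennreal (h (- x)) \<partial>lborel)"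
    by (rule nn_integral_add) auto
  also have "(\<integral>\<^sup>+x. ennreal (h (- x)) \<partial>lborel) = (\<integral>\<^sup>+x. ennreal (h x) \<partial>lborel)"
    using nn_integral_real_affine[of "\<lambda>x. ennreal (h x)" "-1" 0] by simp
  also have "(\<integral>\<^sup>+x. ennreal (h x) \<partial>lborel) = ennreal (s\<^sup>2)"
  proof -
    have "(\<integral>\<^sup>+x. ennreal (h x) \<partial>lborel) = (\<integral>\<^sup>+x. ennreal (1/2) * ennreal (erlang_density 0 (1/s) x * x ^ 2) \<partial>lborel)"
    proof (intro nn_integral_cong)
      fix x
      have e: "h x = 1/2 * (erlang_density 0 (1/s) x * x ^ 2)" by (simp add: h_def)
      have "0 \<le> erlang_density 0 (1/s) x * x ^ 2" using s by (simp add: erlang_density_nonneg)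
      then show "ennreal (h x) = ennreal (1/2) * ennreal (erlang_density 0 (1/s) x * x ^ 2)"
        unfolding e by (intro ennreal_mult) auto
    qed
    also have "\<dots> = ennreal (1/2) * (\<integral>\<^sup>+x. ennreal (erlang_density 0 (1/s) x * x ^ 2) \<partial>lborel)"
      by (rule nn_integral_cmult) auto
    also have "\<dots> = ennreal (1/2) * ennreal (fact (0 + 2) / (fact 0 * (1/s) ^ 2))"
      using s by (subst nn_integral_erlang_ith_moment) auto
    also have "\<dots> = ennreal (1/2 * (fact (0 + 2) / (fact 0 * (1/s) ^ 2)))"
      by (rule ennreal_mult[symmetric]) auto
    also have "\<dots> = ennreal (s\<^sup>2)"
      by (simp add: power_divide)
    finally show ?thesis .
  qed
  also have "ennreal (s\<^sup>2) + ennreal (s\<^sup>2) = ennreal (2 * s\<^sup>2)"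
    by (simp add: ennreal_plus[symmetric] del: ennreal_plus)
  finally show ?thesis .
qed

lemma powr_step:
  fixes x \<gamma> :: real
  assumes g: "\<gamma> > 1" and x: "x \<ge> 1"
  shows "(x + 1) powr (- \<gamma>) \<le> (x powr (1 - \<gamma>) - (x + 1) powr (1 - \<gamma>)) / (\<gamma> - 1)"
proof -
  have d: "((\<lambda>a. a powr (1 - \<gamma>)) has_real_derivative (1 - \<gamma>) * t powr (- \<gamma>)) (at t)" if "t > 0" for t
    using has_real_derivative_powr[OF that, of "1 - \<gamma>"] by simp
  have "\<exists>z. x < z \<and> z < x + 1 \<and> (x + 1) powr (1 - \<gamma>) - x powr (1 - \<gamma>) = (x + 1 - x) * ((1 - \<gamma>) * z powr (- \<gamma>))"
    by (rule MVT2) (use x in \<open>auto intro!: d\<close>)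
  then obtain z where z: "x < z" "z < x + 1"
    and eq: "(x + 1) powr (1 - \<gamma>) - x powr (1 - \<gamma>) = (1 - \<gamma>) * z powr (- \<gamma>)" by auto
  have "(x + 1) powr (- \<gamma>) \<le> z powr (- \<gamma>)"
    by (rule powr_mono2') (use z x g in auto)
  then have "(\<gamma> - 1) * (x + 1) powr (- \<gamma>) \<le> (\<gamma> - 1) * z powr (- \<gamma>)"
    using g by (intro mult_left_mono) auto
  also have "\<dots> = x powr (1 - \<gamma>) - (x + 1) powr (1 - \<gamma>)" using eq by (simp add: algebra_simps)
  finally show ?thesis using g by (simp add: field_simps)
qed

lemma tail_powr:
  fixes \<gamma> :: real
  assumes g: "\<gamma> > 1" and N: "N \<ge> 1"
  shows "summable (\<lambda>j. real (j + N + 1) powr (- \<gamma>))"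
    and "(\<Sum>j. real (j + N + 1) powr (- \<gamma>)) \<le> real N powr (1 - \<gamma>) / (\<gamma> - 1)"
proof -
  define G where "G j = real (j + N) powr (1 - \<gamma>)" for j
  have lim: "G \<longlonglongrightarrow> 0"
    unfolding G_def
  proof (rule tendsto_neg_powr)
    show "1 - \<gamma> < 0" using g by simp
    show "filterlim (\<lambda>j. real (j + N)) at_top sequentially"
      using filterlim_tendsto_add_at_top[OF tendsto_const filterlim_real_sequentially, of "real N"]
      by (simp add: add.commute)
  qed
  have s: "(\<lambda>j. (G j - G (Suc j)) / (\<gamma> - 1)) sums ((G 0 - 0) / (\<gamma> - 1))"
    by (intro sums_divide telescope_sums' lim)
  have le: "real (j + N + 1) powr (- \<gamma>) \<le> (G j - G (Suc j)) / (\<gamma> - 1)" for j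
    using powr_step[OF g, of "real (j + N)"] N by (simp add: G_def add_ac)
  show sm: "summable (\<lambda>j. real (j + N + 1) powr (- \<gamma>))"
    by (rule summable_comparison_test'[OF sums_summable[OF s], of 0]) (use le in auto)
  have "(\<Sum>j. real (j + N + 1) powr (- \<gamma>)) \<le> (\<Sum>j. (G j - G (Suc j)) / (\<gamma> - 1))"
    by (intro suminf_le sm sums_summable[OF s] le)
  also have "\<dots> = real N powr (1 - \<gamma>) / (\<gamma> - 1)"
    using s by (simp add: sums_iff G_def)
  finally show "(\<Sum>j. real (j + N + 1) powr (- \<gamma>)) \<le> real N powr (1 - \<gamma>) / (\<gamma> - 1)" .
qed

lemma S_bound:
  fixes lam :: "nat \<Rightarrow> real"
  assumes lam_pos: "\<And>j. lam j > 0"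
    and c1: "c1 > 0" and c2: "c2 > 0" and \<beta>: "\<beta> > 1" and \<eta>: "\<eta> > 0"
    and \<gamma>: "\<beta> * (\<eta> - 1/2) > 1"
    and lower: "\<And>j. c1 * real (Suc j) powr (-\<beta>) \<le> lam j"
    and upper: "\<And>j. lam j \<le> c2 * real (Suc j) powr (-\<beta>)"
    and \<psi>: "0 < \<psi>" "\<psi> \<le> 1"
  shows "summable (\<lambda>j. lam j powr (\<eta> - 1/2) / (lam j powr \<eta> + \<psi>))"
    and "(\<Sum>j. lam j powr (\<eta> - 1/2) / (lam j powr \<eta> + \<psi>))
          \<le> (c1 powr (-1/2) * 2 powr (1 + \<beta>/2) + c2 powr (\<eta> - 1/2) / (\<beta> * (\<eta> - 1/2) - 1))
             * \<psi> powr (- ((1 + \<beta>/2) / (\<beta> * \<eta>)))"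
proof -
  define g where "g = \<beta> * (\<eta> - 1/2)"
  define E where "E = (1 + \<beta>/2) / (\<beta> * \<eta>)"
  define T where "T j = lam j powr (\<eta> - 1/2) / (lam j powr \<eta> + \<psi>)" for j
  have g1: "g > 1" using \<gamma> by (simp add: g_def)
  have eh: "\<eta> - 1/2 > 0"
  proof (rule ccontr)
    assume "\<not> \<eta> - 1/2 > 0"
    then have "\<beta> * (\<eta> - 1/2) \<le> 0" using \<beta> by (simp add: mult_nonneg_nonpos)
    then show False using \<gamma> by simp
  qed
  have T0: "0 \<le> T j" for j unfolding T_def using \<psi> by simp
  have T1: "T j \<le> c1 powr (-1/2) * real (Suc j) powr (\<beta>/2)" for j
  proof -
    have "T j \<le> lam j powr (\<eta> - 1/2) / lam j powr \<eta>"
      unfolding T_def using \<psi> lam_pos[of j] by (intro frac_le) auto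
    also have "\<dots> = lam j powr (-1/2)" by (simp add: powr_diff[symmetric])
    also have "\<dots> \<le> (c1 * real (Suc j) powr (-\<beta>)) powr (-1/2)"
      by (rule powr_mono2') (use lower[of j] c1 in auto)
    also have "\<dots> = c1 powr (-1/2) * real (Suc j) powr (\<beta>/2)"
      by (simp add: powr_mult powr_powr)
    finally show ?thesis .
  qed
  have T2: "T j \<le> c2 powr (\<eta> - 1/2) / \<psi> * real (Suc j) powr (- g)" for j
  proof -
    have "T j \<le> lam j powr (\<eta> - 1/2) / \<psi>"
      unfolding T_def using \<psi> lam_pos[of j] by (intro frac_le) auto
    also have "lam j powr (\<eta> - 1/2) \<le> (c2 * real (Suc j) powr (-\<beta>)) powr (\<eta> - 1/2)"
      by (rule powr_mono2) (use upper[of j] lam_pos[of j] eh in auto)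
    also have "\<dots> = c2 powr (\<eta> - 1/2) * real (Suc j) powr (- g)"
      by (simp add: powr_mult powr_powr g_def)
    finally show ?thesis using \<psi> by (simp add: divide_right_mono field_simps)
  qed
  have sg: "summable (\<lambda>j. real (Suc j) powr (- g))"
    using summable_Suc_iff[of "\<lambda>n. real n powr (- g)"] summable_real_powr_iff[of "- g"] g1 by simp
  have sT: "summable T"
    by (rule summable_comparison_test'[OF summable_mult[OF sg, of "c2 powr (\<eta> - 1/2) / \<psi>"], of 0])
       (use T0 T2 in auto)
  then show "summable (\<lambda>j. lam j powr (\<eta> - 1/2) / (lam j powr \<eta> + \<psi>))" by (simp add: T_def[abs_def])
  define P where "P = \<psi> powr (- 1 / (\<beta> * \<eta>))"
  have P1: "P \<ge> 1"
  proof -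
    have "1 powr (- 1 / (\<beta> * \<eta>)) \<le> \<psi> powr (- 1 / (\<beta> * \<eta>))"
      by (rule powr_mono2') (use \<psi> \<beta> \<eta> in \<open>auto simp: divide_nonpos_pos\<close>)
    then show ?thesis by (simp add: P_def)
  qed
  define N where "N = nat \<lceil>P\<rceil>"
  have cP: "of_int \<lceil>P\<rceil> - 1 < P" "P \<le> of_int \<lceil>P\<rceil>" using ceiling_correct[of P] by auto
  have rN: "real N = of_int \<lceil>P\<rceil>" unfolding N_def using P1 cP by simp
  have NP: "real N \<ge> P" "real N \<le> 2 * P" "N \<ge> 1"
    using rN cP P1 by linarith+
  have split: "(\<Sum>j. T j) = (\<Sum>j. T (j + N)) + (\<Sum>j<N. T j)"
    by (rule suminf_split_initial_segment[OF sT])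
  have head: "(\<Sum>j<N. T j) \<le> c1 powr (-1/2) * 2 powr (1 + \<beta>/2) * \<psi> powr (- E)"
  proof -
    have "(\<Sum>j<N. T j) \<le> (\<Sum>j<N. c1 powr (-1/2) * real N powr (\<beta>/2))"
    proof (intro sum_mono)
      fix j assume "j \<in> {..<N}"
      then have "real (Suc j) \<le> real N" by simp
      then have "real (Suc j) powr (\<beta>/2) \<le> real N powr (\<beta>/2)"
        by (intro powr_mono2) (use \<beta> in auto)
      then show "T j \<le> c1 powr (-1/2) * real N powr (\<beta>/2)"
        using T1[of j] c1 by (meson mult_left_mono order_trans powr_ge_zero)
    qed
    also have "\<dots> = c1 powr (-1/2) * (real N powr 1 * real N powr (\<beta>/2))"
      using NP by simp
    also have "\<dots> = c1 powr (-1/2) * real N powr (1 + \<beta>/2)"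
      by (simp add: powr_add)
    also have "\<dots> \<le> c1 powr (-1/2) * (2 * P) powr (1 + \<beta>/2)"
      by (intro mult_left_mono powr_mono2) (use NP \<beta> in auto)
    also have "(2 * P) powr (1 + \<beta>/2) = 2 powr (1 + \<beta>/2) * \<psi> powr (- E)"
      using \<psi> by (simp add: powr_mult P_def powr_powr E_def)
    finally show ?thesis by (simp add: mult.assoc)
  qed
  have tail: "(\<Sum>j. T (j + N)) \<le> c2 powr (\<eta> - 1/2) / (g - 1) * \<psi> powr (- E)"
  proof -
    have st: "summable (\<lambda>j. real (j + N + 1) powr (- g))" by (rule tail_powr(1)[OF g1 NP(3)])
    have "(\<Sum>j. T (j + N)) \<le> (\<Sum>j. c2 powr (\<eta> - 1/2) / \<psi> * real (j + N + 1) powr (- g))"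
    proof (rule suminf_le)
      show "T (j + N) \<le> c2 powr (\<eta> - 1/2) / \<psi> * real (j + N + 1) powr (- g)" for j
        using T2[of "j + N"] by simp
      show "summable (\<lambda>j. T (j + N))" by (rule summable_ignore_initial_segment[OF sT])
      show "summable (\<lambda>j. c2 powr (\<eta> - 1/2) / \<psi> * real (j + N + 1) powr (- g))"
        by (rule summable_mult[OF st])
    qed
    also have "\<dots> = c2 powr (\<eta> - 1/2) / \<psi> * (\<Sum>j. real (j + N + 1) powr (- g))"
      by (rule suminf_mult[OF st])
    also have "\<dots> \<le> c2 powr (\<eta> - 1/2) / \<psi> * (real N powr (1 - g) / (g - 1))"
      by (intro mult_left_mono tail_powr(2)[OF g1 NP(3)]) (use \<psi> in auto)
    also have "\<dots> \<le> c2 powr (\<eta> - 1/2) / \<psi> * (P powr (1 - g) / (g - 1))"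
      by (intro mult_left_mono divide_right_mono powr_mono2') (use g1 NP P1 \<psi> in auto)
    also have "P powr (1 - g) = \<psi> powr (- E) * \<psi>"
    proof -
      have "P powr (1 - g) = \<psi> powr (- E + 1)"
        unfolding P_def powr_powr by (rule arg_cong[where f="\<lambda>x. \<psi> powr x"]) (use \<beta> \<eta> in \<open>simp add: E_def g_def field_simps\<close>)
      also have "\<dots> = \<psi> powr (- E) * \<psi> powr 1" by (rule powr_add)
      also have "\<dots> = \<psi> powr (- E) * \<psi>" using \<psi> by simp
      finally show ?thesis .
    qed
    also have "c2 powr (\<eta> - 1/2) / \<psi> * (\<psi> powr (- E) * \<psi> / (g - 1)) = c2 powr (\<eta> - 1/2) / (g - 1) * \<psi> powr (- E)"
      using \<psi> g1 by (simp add: field_simps)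
    finally show ?thesis .
  qed
  have "(\<Sum>j. T j) \<le> (c1 powr (-1/2) * 2 powr (1 + \<beta>/2) + c2 powr (\<eta> - 1/2) / (g - 1)) * \<psi> powr (- E)"
    using split head tail by (simp add: distrib_right)
  then show "(\<Sum>j. lam j powr (\<eta> - 1/2) / (lam j powr \<eta> + \<psi>))
          \<le> (c1 powr (-1/2) * 2 powr (1 + \<beta>/2) + c2 powr (\<eta> - 1/2) / (\<beta> * (\<eta> - 1/2) - 1))
             * \<psi> powr (- ((1 + \<beta>/2) / (\<beta> * \<eta>)))"
    by (simp add: T_def[abs_def] g_def E_def)
qed

lemma sq_sum2: "(a + b)\<^sup>2 \<le> 2 * a\<^sup>2 + 2 * b\<^sup>2" for a b :: real
  using sum_squares_ge_zero[of "a - b" 0] by (simp add: power2_eq_square algebra_simps)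

lemma sq_sum3: "(a + b + c)\<^sup>2 \<le> 3 * a\<^sup>2 + 3 * b\<^sup>2 + 3 * c\<^sup>2" for a b c :: real
proof -
  have "0 \<le> (a - b)\<^sup>2 + (b - c)\<^sup>2 + (a - c)\<^sup>2" by simp
  then show ?thesis by (simp add: power2_eq_square algebra_simps)
qed

lemma coeff_summable:
  "orthonormal_basis \<phi> \<Longrightarrow> summable (\<lambda>j. (h \<bullet> \<phi> j)\<^sup>2)"
  using onb_parseval sums_summable by blast

lemma frl_pointwise:
  fixes \<phi> :: "nat \<Rightarrow> 'a::{real_inner,banach}"
  assumes onb: "orthonormal_basis \<phi>"
  shows "(norm ((\<Sum>j<M. (x \<bullet> \<phi> j + B * w j) *\<^sub>R \<phi> j) - \<mu>0))\<^sup>2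
     \<le> 2 * (norm (x - \<mu>0))\<^sup>2 + 2 * B\<^sup>2 * (\<Sum>j<M. (w j)\<^sup>2) + (\<Sum>j. if j \<ge> M then (\<mu>0 \<bullet> \<phi> j)\<^sup>2 else 0)"
proof -
  define v where "v = (\<Sum>j<M. (x \<bullet> \<phi> j + B * w j) *\<^sub>R \<phi> j) - \<mu>0"
  have cv: "v \<bullet> \<phi> k = (if k < M then (x - \<mu>0) \<bullet> \<phi> k + B * w k else - (\<mu>0 \<bullet> \<phi> k))" for k
    unfolding v_def by (simp add: inner_diff_left onb_finsum_inner[OF onb])
  have le: "(v \<bullet> \<phi> k)\<^sup>2 \<le> 2 * ((x - \<mu>0) \<bullet> \<phi> k)\<^sup>2 + 2 * B\<^sup>2 * (if k < M then (w k)\<^sup>2 else 0)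
      + (if k \<ge> M then (\<mu>0 \<bullet> \<phi> k)\<^sup>2 else 0)" for k
  proof (cases "k < M")
    case True
    then show ?thesis using sq_sum2[of "(x - \<mu>0) \<bullet> \<phi> k" "B * w k"]
      by (simp add: cv power_mult_distrib)
  next
    case False
    then show ?thesis by (simp add: cv)
  qed
  have s1: "summable (\<lambda>k. 2 * ((x - \<mu>0) \<bullet> \<phi> k)\<^sup>2)" using coeff_summable[OF onb] by simp
  have s2: "summable (\<lambda>k. 2 * B\<^sup>2 * (if k < M then (w k)\<^sup>2 else 0))"
    by (intro summable_mult) (rule summable_finite[of "{..<M}"]; auto)
  have s3: "summable (\<lambda>k. if k \<ge> M then (\<mu>0 \<bullet> \<phi> k)\<^sup>2 else 0)"
    by (rule summable_comparison_test'[OF coeff_summable[OF onb, of \<mu>0], of 0]) auto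
  have "(norm v)\<^sup>2 = (\<Sum>k. (v \<bullet> \<phi> k)\<^sup>2)" using onb_parseval[OF onb, of v] by (simp add: sums_iff)
  also have "\<dots> \<le> (\<Sum>k. 2 * ((x - \<mu>0) \<bullet> \<phi> k)\<^sup>2 + 2 * B\<^sup>2 * (if k < M then (w k)\<^sup>2 else 0)
      + (if k \<ge> M then (\<mu>0 \<bullet> \<phi> k)\<^sup>2 else 0))"
    by (intro suminf_le le summable_add s1 s2 s3 coeff_summable[OF onb])
  also have "\<dots> = (\<Sum>k. 2 * ((x - \<mu>0) \<bullet> \<phi> k)\<^sup>2) + (\<Sum>k. 2 * B\<^sup>2 * (if k < M then (w k)\<^sup>2 else 0))
      + (\<Sum>k. if k \<ge> M then (\<mu>0 \<bullet> \<phi> k)\<^sup>2 else 0)"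
    by (simp only: suminf_add[OF summable_add[OF s1 s2] s3, symmetric] suminf_add[OF s1 s2, symmetric])
  also have "(\<Sum>k. 2 * ((x - \<mu>0) \<bullet> \<phi> k)\<^sup>2) = 2 * (norm (x - \<mu>0))\<^sup>2"
    using onb_parseval[OF onb, of "x - \<mu>0"] by (simp add: sums_iff suminf_mult coeff_summable[OF onb])
  also have "(\<Sum>k. 2 * B\<^sup>2 * (if k < M then (w k)\<^sup>2 else 0)) = 2 * B\<^sup>2 * (\<Sum>j<M. (w j)\<^sup>2)"
    by (subst suminf_finite[of "{..<M}"]) (auto simp: sum_distrib_left)
  finally show ?thesis unfolding v_def .
qed

lemma tail_bound:
  fixes lam :: "nat \<Rightarrow> real"
  assumes onb: "orthonormal_basis \<phi>" and lam_pos: "\<And>j. lam j > 0"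
    and mono: "\<And>j. lam (Suc j) \<le> lam j" and \<eta>: "\<eta> > 0"
    and reg: "summable (\<lambda>j. (\<mu>0 \<bullet> \<phi> j)\<^sup>2 / lam j powr \<eta>)"
  shows "(\<Sum>j. if j \<ge> M then (\<mu>0 \<bullet> \<phi> j)\<^sup>2 else 0) \<le> lam M powr \<eta> * (\<Sum>j. (\<mu>0 \<bullet> \<phi> j)\<^sup>2 / lam j powr \<eta>)"
proof -
  have am: "lam j \<le> lam M" if "M \<le> j" for j
    using that by (induction j rule: dec_induct) (auto intro: order_trans[OF mono])
  have le: "(if j \<ge> M then (\<mu>0 \<bullet> \<phi> j)\<^sup>2 else 0) \<le> lam M powr \<eta> * ((\<mu>0 \<bullet> \<phi> j)\<^sup>2 / lam j powr \<eta>)" for j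
  proof (cases "j \<ge> M")
    case True
    have "lam j powr \<eta> \<le> lam M powr \<eta>" by (rule powr_mono2) (use am[OF True] lam_pos[of j] \<eta> in auto)
    then have "(\<mu>0 \<bullet> \<phi> j)\<^sup>2 * lam j powr \<eta> \<le> (\<mu>0 \<bullet> \<phi> j)\<^sup>2 * lam M powr \<eta>"
      by (intro mult_left_mono) auto
    then show ?thesis using True lam_pos[of j] by (simp add: field_simps)
  next
    case False
    then show ?thesis using lam_pos[of j] lam_pos[of M] by simp
  qed
  have s3: "summable (\<lambda>k. if k \<ge> M then (\<mu>0 \<bullet> \<phi> k)\<^sup>2 else 0)"
    by (rule summable_comparison_test'[OF coeff_summable[OF onb, of \<mu>0], of 0]) auto
  have "(\<Sum>j. if j \<ge> M then (\<mu>0 \<bullet> \<phi> j)\<^sup>2 else 0) \<le> (\<Sum>j. lam M powr \<eta> * ((\<mu>0 \<bullet> \<phi> j)\<^sup>2 / lam j powr \<eta>))"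
    by (intro suminf_le le s3 summable_mult reg)
  also have "\<dots> = lam M powr \<eta> * (\<Sum>j. (\<mu>0 \<bullet> \<phi> j)\<^sup>2 / lam j powr \<eta>)"
    by (rule suminf_mult[OF reg])
  finally show ?thesis .
qed

lemma iclp_pointwise:
  fixes \<phi> :: "nat \<Rightarrow> 'a::{real_inner,banach}" and lam :: "nat \<Rightarrow> real"
  assumes onb: "orthonormal_basis \<phi>" and lam_pos: "\<And>j. lam j > 0" and \<psi>: "\<psi> > 0"
    and sz: "summable (\<lambda>k. lam k * (z k)\<^sup>2)"
    and reg: "summable (\<lambda>j. (\<mu>0 \<bullet> \<phi> j)\<^sup>2 / lam j powr \<eta>)"
  shows "(norm ((\<Sum>k. (lam k powr \<eta> / (lam k powr \<eta> + \<psi>) * (x \<bullet> \<phi> k)) *\<^sub>R \<phi> k)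
            + \<sigma> *\<^sub>R (\<Sum>k. (sqrt (lam k) * z k) *\<^sub>R \<phi> k) - \<mu>0))\<^sup>2
     \<le> 3 * (norm (x - \<mu>0))\<^sup>2 + 3 * \<psi> * (\<Sum>j. (\<mu>0 \<bullet> \<phi> j)\<^sup>2 / lam j powr \<eta>)
       + 3 * \<sigma>\<^sup>2 * (\<Sum>k. lam k * (z k)\<^sup>2)"
proof -
  define w where "w k = lam k powr \<eta> / (lam k powr \<eta> + \<psi>)" for k
  have w01: "0 \<le> w k" "w k \<le> 1" for k unfolding w_def using \<psi> powr_ge_zero[of "lam k" \<eta>]
    by (auto simp: divide_le_eq_1 add_nonneg_pos)
  have sq1: "summable (\<lambda>k. (w k * (x \<bullet> \<phi> k))\<^sup>2)"
  proof (rule summable_comparison_test'[OF coeff_summable[OF onb, of x], of 0])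
    fix k :: nat
    have "(w k)\<^sup>2 * (x \<bullet> \<phi> k)\<^sup>2 \<le> 1 * (x \<bullet> \<phi> k)\<^sup>2"
      by (intro mult_right_mono) (use w01[of k] in \<open>auto simp: power_le_one\<close>)
    then show "norm ((w k * (x \<bullet> \<phi> k))\<^sup>2) \<le> (x \<bullet> \<phi> k)\<^sup>2" by (simp add: power_mult_distrib)
  qed
  have sq2: "summable (\<lambda>k. (sqrt (lam k) * z k)\<^sup>2)"
    using sz lam_pos by (simp add: power_mult_distrib less_imp_le)
  define q where "q = (\<Sum>k. (w k * (x \<bullet> \<phi> k)) *\<^sub>R \<phi> k)"
  define e where "e = (\<Sum>k. (sqrt (lam k) * z k) *\<^sub>R \<phi> k)"
  define v where "v = q + \<sigma> *\<^sub>R e - \<mu>0"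
  have cv: "v \<bullet> \<phi> k = w k * ((x - \<mu>0) \<bullet> \<phi> k) + (- (1 - w k) * (\<mu>0 \<bullet> \<phi> k)) + \<sigma> * (sqrt (lam k) * z k)" for k
  proof -
    have qk: "q \<bullet> \<phi> k = w k * (x \<bullet> \<phi> k)" unfolding q_def by (rule onb_synth(2)[OF onb sq1])
    have ek: "e \<bullet> \<phi> k = sqrt (lam k) * z k" unfolding e_def by (rule onb_synth(2)[OF onb sq2])
    show ?thesis unfolding v_def by (simp add: inner_diff_left inner_add_left qk ek algebra_simps)
  qed
  have b: "((1 - w k) * (\<mu>0 \<bullet> \<phi> k))\<^sup>2 \<le> \<psi> * ((\<mu>0 \<bullet> \<phi> k)\<^sup>2 / lam k powr \<eta>)" for k
  proof -
    have lp: "lam k powr \<eta> > 0" using lam_pos[of k] by simp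
    have nz: "lam k powr \<eta> + \<psi> > 0" using lp \<psi> by linarith
    have aux: "\<And>a p :: real. a + p > 0 \<Longrightarrow> 1 - a / (a + p) = p / (a + p)"
      by (simp add: field_simps)
    have om: "1 - w k = \<psi> / (lam k powr \<eta> + \<psi>)" unfolding w_def by (rule aux[OF nz])
    have "(1 - w k)\<^sup>2 \<le> 1 - w k" using w01[of k] mult_left_le[of "1 - w k" "1 - w k"] by (simp add: power2_eq_square)
    also have "\<dots> \<le> \<psi> / lam k powr \<eta>" unfolding om using lp \<psi> by (intro frac_le) auto
    finally have "(1 - w k)\<^sup>2 * (\<mu>0 \<bullet> \<phi> k)\<^sup>2 \<le> \<psi> / lam k powr \<eta> * (\<mu>0 \<bullet> \<phi> k)\<^sup>2"
      by (intro mult_right_mono) auto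
    then show ?thesis by (simp add: power_mult_distrib)
  qed
  have a: "(w k * ((x - \<mu>0) \<bullet> \<phi> k))\<^sup>2 \<le> ((x - \<mu>0) \<bullet> \<phi> k)\<^sup>2" for k
  proof -
    have "(w k)\<^sup>2 * ((x - \<mu>0) \<bullet> \<phi> k)\<^sup>2 \<le> 1 * ((x - \<mu>0) \<bullet> \<phi> k)\<^sup>2"
      by (intro mult_right_mono) (use w01[of k] in \<open>auto simp: power_le_one\<close>)
    then show ?thesis by (simp add: power_mult_distrib)
  qed
  have le: "(v \<bullet> \<phi> k)\<^sup>2 \<le> 3 * ((x - \<mu>0) \<bullet> \<phi> k)\<^sup>2 + 3 * \<psi> * ((\<mu>0 \<bullet> \<phi> k)\<^sup>2 / lam k powr \<eta>)
      + 3 * \<sigma>\<^sup>2 * (lam k * (z k)\<^sup>2)" for k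
  proof -
    have "(v \<bullet> \<phi> k)\<^sup>2 \<le> 3 * (w k * ((x - \<mu>0) \<bullet> \<phi> k))\<^sup>2 + 3 * (- (1 - w k) * (\<mu>0 \<bullet> \<phi> k))\<^sup>2
        + 3 * (\<sigma> * (sqrt (lam k) * z k))\<^sup>2"
      unfolding cv by (rule sq_sum3)
    also have "(\<sigma> * (sqrt (lam k) * z k))\<^sup>2 = \<sigma>\<^sup>2 * (lam k * (z k)\<^sup>2)"
      using lam_pos[of k] by (simp add: power_mult_distrib less_imp_le)
    also have "(- (1 - w k) * (\<mu>0 \<bullet> \<phi> k))\<^sup>2 = ((1 - w k) * (\<mu>0 \<bullet> \<phi> k))\<^sup>2"
      by (simp only: mult_minus_left power2_minus)
    finally show ?thesis using a[of k] b[of k] by linarith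
  qed
  have s1: "summable (\<lambda>k. 3 * ((x - \<mu>0) \<bullet> \<phi> k)\<^sup>2)" using coeff_summable[OF onb] by simp
  have s2: "summable (\<lambda>k. 3 * \<psi> * ((\<mu>0 \<bullet> \<phi> k)\<^sup>2 / lam k powr \<eta>))" by (intro summable_mult reg)
  have s3: "summable (\<lambda>k. 3 * \<sigma>\<^sup>2 * (lam k * (z k)\<^sup>2))" by (intro summable_mult sz)
  have "(norm v)\<^sup>2 = (\<Sum>k. (v \<bullet> \<phi> k)\<^sup>2)" using onb_parseval[OF onb, of v] by (simp add: sums_iff)
  also have "\<dots> \<le> (\<Sum>k. 3 * ((x - \<mu>0) \<bullet> \<phi> k)\<^sup>2 + 3 * \<psi> * ((\<mu>0 \<bullet> \<phi> k)\<^sup>2 / lam k powr \<eta>)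
      + 3 * \<sigma>\<^sup>2 * (lam k * (z k)\<^sup>2))"
    by (intro suminf_le le summable_add s1 s2 s3 coeff_summable[OF onb])
  also have "\<dots> = (\<Sum>k. 3 * ((x - \<mu>0) \<bullet> \<phi> k)\<^sup>2) + (\<Sum>k. 3 * \<psi> * ((\<mu>0 \<bullet> \<phi> k)\<^sup>2 / lam k powr \<eta>))
      + (\<Sum>k. 3 * \<sigma>\<^sup>2 * (lam k * (z k)\<^sup>2))"
    by (simp only: suminf_add[OF summable_add[OF s1 s2] s3, symmetric] suminf_add[OF s1 s2, symmetric])
  also have "(\<Sum>k. 3 * ((x - \<mu>0) \<bullet> \<phi> k)\<^sup>2) = 3 * (norm (x - \<mu>0))\<^sup>2"
    using onb_parseval[OF onb, of "x - \<mu>0"] by (simp add: sums_iff suminf_mult coeff_summable[OF onb])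
  also have "(\<Sum>k. 3 * \<psi> * ((\<mu>0 \<bullet> \<phi> k)\<^sup>2 / lam k powr \<eta>)) = 3 * \<psi> * (\<Sum>j. (\<mu>0 \<bullet> \<phi> j)\<^sup>2 / lam j powr \<eta>)"
    by (rule suminf_mult[OF reg])
  also have "(\<Sum>k. 3 * \<sigma>\<^sup>2 * (lam k * (z k)\<^sup>2)) = 3 * \<sigma>\<^sup>2 * (\<Sum>k. lam k * (z k)\<^sup>2)"
    by (rule suminf_mult[OF sz])
  finally show ?thesis unfolding v_def q_def e_def w_def .
qed

lemma noise_norm:
  fixes \<phi> :: "nat \<Rightarrow> 'a::{real_inner,banach}" and lam :: "nat \<Rightarrow> real"
  assumes onb: "orthonormal_basis \<phi>" and lam_pos: "\<And>j. lam j > 0"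
    and sz: "summable (\<lambda>k. lam k * (z k)\<^sup>2)"
  shows "(norm (\<Sum>k. (sqrt (lam k) * z k) *\<^sub>R \<phi> k))\<^sup>2 = (\<Sum>k. lam k * (z k)\<^sup>2)"
proof -
  have sq2: "summable (\<lambda>k. (sqrt (lam k) * z k)\<^sup>2)"
    using sz lam_pos by (simp add: power_mult_distrib less_imp_le)
  show ?thesis using onb_synth(3)[OF onb sq2] lam_pos by (simp add: power_mult_distrib less_imp_le)
qed

lemma (in prob_space) nn3:
  fixes f :: "'a \<Rightarrow> real" and g :: "'a \<Rightarrow> ennreal"
  assumes [measurable]: "f \<in> borel_measurable M" "g \<in> borel_measurable M"
    and f0: "\<And>\<omega>. 0 \<le> f \<omega>"
    and pt: "AE \<omega> in M. ennreal (h \<omega>) \<le> ennreal (p * f \<omega>) + ennreal q + ennreal r * g \<omega>"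
    and F: "(\<integral>\<^sup>+\<omega>. ennreal (f \<omega>) \<partial>M) \<le> ennreal F" and G: "(\<integral>\<^sup>+\<omega>. g \<omega> \<partial>M) \<le> ennreal G"
    and pos: "0 \<le> p" "0 \<le> q" "0 \<le> r" "0 \<le> F" "0 \<le> G"
  shows "(\<integral>\<^sup>+\<omega>. ennreal (h \<omega>) \<partial>M) \<le> ennreal (p * F + q + r * G)"
proof -
  have "(\<integral>\<^sup>+\<omega>. ennreal (h \<omega>) \<partial>M) \<le> (\<integral>\<^sup>+\<omega>. (ennreal p * ennreal (f \<omega>) + ennreal q + ennreal r * g \<omega>) \<partial>M)"
    by (rule nn_integral_mono_AE) (use pt f0 pos in \<open>auto simp: ennreal_mult\<close>)
  also have "\<dots> = (\<integral>\<^sup>+\<omega>. ennreal p * ennreal (f \<omega>) \<partial>M) + (\<integral>\<^sup>+\<omega>. ennreal q \<partial>M) + (\<integral>\<^sup>+\<omega>. ennreal r * g \<omega> \<partial>M)"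
    by (simp add: nn_integral_add)
  also have "\<dots> = ennreal p * (\<integral>\<^sup>+\<omega>. ennreal (f \<omega>) \<partial>M) + ennreal q + ennreal r * (\<integral>\<^sup>+\<omega>. g \<omega> \<partial>M)"
    by (simp add: nn_integral_cmult emeasure_space_1)
  also have "\<dots> \<le> ennreal p * ennreal F + ennreal q + ennreal r * ennreal G"
    by (intro add_mono mult_left_mono F G order_refl) auto
  also have "\<dots> = ennreal (p * F + q + r * G)"
    using pos by (simp add: ennreal_mult)
  finally show ?thesis .
qed

lemma frl_real1:
  assumes "b > 0" "n \<ge> 1" "real M \<le> b * real n powr (1/3)"
  shows "real M ^ 3 \<le> b ^ 3 * real n"
proof -
  have "real M ^ 3 \<le> (b * real n powr (1/3)) ^ 3" by (rule power_mono) (use assms in auto)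
  also have "\<dots> = b ^ 3 * (real n powr (1/3)) ^ 3" by (simp add: power_mult_distrib)
  also have "(real n powr (1/3)) ^ 3 = real n powr (real 3 * (1/3))"
    by (rule powr_power) (use assms in auto)
  also have "\<dots> = real n" using assms by simp
  finally show ?thesis .
qed

lemma frl_real2:
  fixes lam :: "nat \<Rightarrow> real"
  assumes c2: "c2 > 0" and a: "a > 0" and \<eta>: "\<eta> > 0" and \<beta>: "\<beta> > 0" and n: "n \<ge> 1"
    and up: "lam M \<le> c2 * real (Suc M) powr (- \<beta>)" and lp: "lam M > 0"
    and Mlow: "a * real n powr (1 / (\<eta> * \<beta>)) \<le> real M"
  shows "real n * lam M powr \<eta> \<le> c2 powr \<eta> * a powr (- \<beta> * \<eta>)"
proof -
  have apos: "a * real n powr (1 / (\<eta> * \<beta>)) > 0" using a n by simp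
  then have Mpos: "real M > 0" using Mlow by linarith
  have "real (Suc M) powr (- \<beta>) \<le> real M powr (- \<beta>)"
    by (rule powr_mono2') (use \<beta> Mpos in auto)
  then have l1: "lam M \<le> c2 * real M powr (- \<beta>)" using up c2 by (meson mult_left_mono less_imp_le order_trans)
  have "lam M powr \<eta> \<le> (c2 * real M powr (- \<beta>)) powr \<eta>"
    by (rule powr_mono2) (use l1 lp \<eta> in auto)
  also have "\<dots> = c2 powr \<eta> * real M powr (- \<beta> * \<eta>)" by (simp add: powr_mult powr_powr)
  also have "real M powr (- \<beta> * \<eta>) \<le> (a * real n powr (1 / (\<eta> * \<beta>))) powr (- \<beta> * \<eta>)"
    by (rule powr_mono2') (use \<beta> \<eta> apos Mlow in \<open>auto simp: mult_nonneg_nonneg\<close>)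
  also have "\<dots> = a powr (- \<beta> * \<eta>) * real n powr (- 1)"
  proof -
    have "1 / (\<eta> * \<beta>) * (- \<beta> * \<eta>) = -1" using \<beta> \<eta> by (simp add: field_simps)
    then show ?thesis by (simp add: powr_mult powr_powr)
  qed
  also have "real n powr (- 1) = 1 / real n" using n by (simp add: powr_minus divide_inverse)
  finally have "lam M powr \<eta> \<le> c2 powr \<eta> * (a powr (- \<beta> * \<eta>) * (1 / real n))"
    using c2 by (simp add: mult_left_mono)
  then have "real n * lam M powr \<eta> \<le> real n * (c2 powr \<eta> * (a powr (- \<beta> * \<eta>) * (1 / real n)))"
    by (intro mult_left_mono) auto
  also have "\<dots> = c2 powr \<eta> * a powr (- \<beta> * \<eta>)" using n by simp
  finally show ?thesis .
qed

lemma qr_real: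
  fixes S Cs E \<psi> a x p :: real
  assumes S: "0 \<le> S" "S \<le> Cs * \<psi> powr (- E)" and E: "E \<ge> 0" and \<psi>: "\<psi> > 0" and a: "a > 0" and x: "x > 0"
    and low: "a * x powr (- p) \<le> \<psi>" and pE: "p * (2 * E) = 1"
  shows "S\<^sup>2 \<le> Cs\<^sup>2 * a powr (- 2 * E) * x"
proof -
  have "S\<^sup>2 \<le> (Cs * \<psi> powr (- E))\<^sup>2" by (rule power_mono) (use S in auto)
  also have "\<dots> = Cs\<^sup>2 * (\<psi> powr (- E))\<^sup>2" by (simp add: power_mult_distrib)
  also have "(\<psi> powr (- E))\<^sup>2 = \<psi> powr (- 2 * E)"
    using powr_power[of \<psi> "- E" 2] \<psi> by simp
  also have "\<psi> powr (- 2 * E) \<le> (a * x powr (- p)) powr (- 2 * E)"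
    by (rule powr_mono2') (use E a x low in auto)
  also have "\<dots> = a powr (- 2 * E) * x"
  proof -
    have "- p * (- 2 * E) = 1" using pE by simp
    then show ?thesis using x by (simp add: powr_mult powr_powr)
  qed
  finally show ?thesis by (simp add: mult_left_mono mult.assoc)
qed

lemma mor_real:
  fixes S Cs E :: real
  assumes S: "0 \<le> S" "S \<le> Cs * (1 / real n) powr (- E)" and n: "n \<ge> 1"
  shows "S\<^sup>2 \<le> Cs\<^sup>2 * real n powr (2 * E)"
proof -
  have "S\<^sup>2 \<le> (Cs * (1 / real n) powr (- E))\<^sup>2" by (rule power_mono) (use S in auto)
  also have "(1 / real n) powr (- E) = real n powr E"
    using n by (simp add: powr_divide powr_minus divide_inverse inverse_powr)
  also have "(Cs * real n powr E)\<^sup>2 = Cs\<^sup>2 * real n powr (2 * E)"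
    using powr_power[of "real n" E 2] n by (simp add: power_mult_distrib mult.commute)
  finally show ?thesis .
qed

theorem corollary1:
  fixes M :: "'w measure"
    and X :: "nat \<Rightarrow> 'w \<Rightarrow> 'a::{real_inner, banach, second_countable_topology}"
    and W0 Z :: "nat \<Rightarrow> 'w \<Rightarrow> real"
    and \<mu>0 :: 'a and \<phi> :: "nat \<Rightarrow> 'a" and lam :: "nat \<Rightarrow> real"
    and \<tau> \<beta> \<eta> c1 c2 \<epsilon> :: real
  assumes prob: "prob_space M"
    and X_rv: "\<And>i. X i \<in> borel_measurable M"
    and X_indep: "prob_space.indep_vars M (\<lambda>_. borel) X UNIV"
    and X_ident: "\<And>i. distr M borel (X i) = distr M borel (X 0)"
    and X_int: "integrable M (X 0)"
    and X_mean: "(\<integral>\<omega>. X 0 \<omega> \<partial>M) = \<mu>0"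
    and X_bdd: "AE \<omega> in M. norm (X 0 \<omega>) \<le> \<tau>"
    and tau_pos: "\<tau> > 0"
    and W0_distr: "\<And>j. distributed M lborel (W0 j) (\<lambda>x. ennreal (laplace_density 1 x))"
    and W0_indep: "prob_space.indep_vars M (\<lambda>_. borel) W0 UNIV"
    and W0_X_indep: "indep_processes M X W0"
    and Z_distr: "\<And>j. distributed M lborel (Z j) (\<lambda>x. ennreal (laplace_density (1 / sqrt 2) x))"
    and Z_indep: "prob_space.indep_vars M (\<lambda>_. borel) Z UNIV"
    and Z_X_indep: "indep_processes M X Z"
    and onb: "orthonormal_basis \<phi>"
    and lam_pos: "\<And>j. lam j > 0"
    and lam_mono: "\<And>j. lam (Suc j) \<le> lam j"
    and beta_gt: "\<beta> > 1"
    and c1_pos: "c1 > 0" and c2_pos: "c2 > 0"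
    and lam_lower: "\<And>j. c1 * real (Suc j) powr (- \<beta>) \<le> lam j"
    and lam_upper: "\<And>j. lam j \<le> c2 * real (Suc j) powr (- \<beta>)"
    and mu0_reg: "in_H_C_pow lam \<phi> \<eta> \<mu>0"
    and eps_pos: "\<epsilon> > 0"
  shows
    "(\<forall>(Ms :: nat \<Rightarrow> nat) a b.
        \<eta> > 1 + 1 / \<beta> \<and> a > 0 \<and> b > 0 \<and>
        (\<forall>n\<ge>1. a * real n powr (1 / (\<eta> * \<beta>)) \<le> real (Ms n) \<and>
                 real (Ms n) \<le> b * real n powr (1 / 3))
      \<longrightarrow> (\<exists>K::real. \<forall>n\<ge>1.
             ennreal (real n) * (\<integral>\<^sup>+\<omega>. ennreal ((norm (frl_est \<phi> \<tau> \<epsilon> X W0 n (Ms n) \<omega> - \<mu>0))\<^sup>2) \<partial>M)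
               \<le> ennreal K))
   \<and> (\<forall>(\<psi>s :: nat \<Rightarrow> real) a b.
        \<eta> \<ge> 1 + 2 / \<beta> \<and> a > 0 \<and> b > 0 \<and>
        (\<forall>n\<ge>1. 0 < \<psi>s n \<and> \<psi>s n \<le> 1 \<and>
                 a * (real n * \<epsilon>\<^sup>2) powr (- \<eta> * \<beta> / (\<beta> + 2)) \<le> \<psi>s n \<and>
                 \<psi>s n \<le> b * real n powr (-1))
      \<longrightarrow> (\<exists>K::real. \<forall>n\<ge>1.
             ennreal (real n) * (\<integral>\<^sup>+\<omega>. ennreal ((norm (iclp_qr_est lam \<phi> \<eta> (\<psi>s n) \<tau> \<epsilon> X Z n \<omega> - \<mu>0))\<^sup>2) \<partial>M)
               \<le> ennreal K))
   \<and> (\<eta> > 1 + 2 / \<beta> \<longrightarrow>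
        (\<lambda>n. ennreal (real n) *
            (\<integral>\<^sup>+\<omega>. ennreal ((norm (iclp_qr_est lam \<phi> \<eta> (1 / real n) \<tau> \<epsilon> X Z n \<omega>
                                     - qr_est lam \<phi> \<eta> (1 / real n) X n \<omega>))\<^sup>2) \<partial>M))
        \<longlonglongrightarrow> 0)"
proof -
  interpret prob_space M by (rule prob)
  have X_rv'[measurable]: "X i \<in> borel_measurable M" for i by (rule X_rv)
  have W_meas[measurable]: "W0 j \<in> borel_measurable M" for j
    using distributed_measurable[OF W0_distr[of j]] by simp
  have Z_meas[measurable]: "Z j \<in> borel_measurable M" for j
    using distributed_measurable[OF Z_distr[of j]] by simp
  have Xbar_meas[measurable]: "Xbar X n \<in> borel_measurable M" for n unfolding Xbar_def by measurable
  have xb: "(\<integral>\<^sup>+\<omega>. ennreal ((norm (Xbar X n \<omega> - \<mu>0))\<^sup>2) \<partial>M) \<le> ennreal (4 * \<tau>\<^sup>2 / real n)" if "n \<ge> 1" for n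
    by (rule xbar_var[OF onb X_rv X_indep X_ident X_int X_mean X_bdd that])
  have Wm: "(\<integral>\<^sup>+\<omega>. ennreal ((W0 j \<omega>)\<^sup>2) \<partial>M) \<le> ennreal 2" for j
    using laplace_second_moment[OF _ W0_distr[of j]] by simp
  have Zm: "(\<integral>\<^sup>+\<omega>. ennreal ((Z j \<omega>)\<^sup>2) \<partial>M) \<le> ennreal 1" for j
    using laplace_second_moment[of "1 / sqrt 2", OF _ Z_distr[of j]] by (simp add: power_divide)
  have reg: "summable (\<lambda>j. (\<mu>0 \<bullet> \<phi> j)\<^sup>2 / lam j powr \<eta>)" using mu0_reg by (simp add: in_H_C_pow_def)
  define R where "R = (\<Sum>j. (\<mu>0 \<bullet> \<phi> j)\<^sup>2 / lam j powr \<eta>)"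
  have R0: "0 \<le> R" unfolding R_def by (intro suminf_nonneg reg) auto
  have slam: "summable lam"
  proof -
    have "summable (\<lambda>j. real (Suc j) powr (- \<beta>))"
      using summable_Suc_iff[of "\<lambda>n. real n powr (- \<beta>)"] summable_real_powr_iff[of "- \<beta>"] beta_gt by simp
    then have "summable (\<lambda>j. c2 * real (Suc j) powr (- \<beta>))" by (rule summable_mult)
    then show ?thesis
      by (rule summable_comparison_test'[of _ 0]) (use lam_upper lam_pos in \<open>auto simp: less_imp_le\<close>)
  qed
  define \<Lambda> where "\<Lambda> = suminf lam"
  have L0: "0 \<le> \<Lambda>" unfolding \<Lambda>_def by (intro suminf_nonneg slam less_imp_le lam_pos)
  define g where "g \<omega> = (\<Sum>k. ennreal (lam k * (Z k \<omega>)\<^sup>2))" for \<omega>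
  have g_meas[measurable]: "g \<in> borel_measurable M" unfolding g_def by measurable
  have gint: "(\<integral>\<^sup>+\<omega>. g \<omega> \<partial>M) \<le> ennreal \<Lambda>"
  proof -
    have "(\<integral>\<^sup>+\<omega>. g \<omega> \<partial>M) = (\<Sum>k. \<integral>\<^sup>+\<omega>. ennreal (lam k * (Z k \<omega>)\<^sup>2) \<partial>M)"
      unfolding g_def by (rule nn_integral_suminf) auto
    also have "\<dots> = (\<Sum>k. ennreal (lam k) * (\<integral>\<^sup>+\<omega>. ennreal ((Z k \<omega>)\<^sup>2) \<partial>M))"
    proof (intro suminf_cong)
      fix k
      have "(\<integral>\<^sup>+\<omega>. ennreal (lam k * (Z k \<omega>)\<^sup>2) \<partial>M) = (\<integral>\<^sup>+\<omega>. ennreal (lam k) * ennreal ((Z k \<omega>)\<^sup>2) \<partial>M)"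
        by (intro nn_integral_cong) (simp add: ennreal_mult less_imp_le[OF lam_pos])
      also have "\<dots> = ennreal (lam k) * (\<integral>\<^sup>+\<omega>. ennreal ((Z k \<omega>)\<^sup>2) \<partial>M)"
        by (rule nn_integral_cmult) auto
      finally show "(\<integral>\<^sup>+\<omega>. ennreal (lam k * (Z k \<omega>)\<^sup>2) \<partial>M) = ennreal (lam k) * (\<integral>\<^sup>+\<omega>. ennreal ((Z k \<omega>)\<^sup>2) \<partial>M)" .
    qed
    also have "\<dots> \<le> (\<Sum>k. ennreal (lam k))"
    proof (intro suminf_le summableI)
      fix k
      have "ennreal (lam k) * (\<integral>\<^sup>+\<omega>. ennreal ((Z k \<omega>)\<^sup>2) \<partial>M) \<le> ennreal (lam k) * ennreal 1"
        by (intro mult_left_mono Zm) auto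
      then show "ennreal (lam k) * (\<integral>\<^sup>+\<omega>. ennreal ((Z k \<omega>)\<^sup>2) \<partial>M) \<le> ennreal (lam k)" by simp
    qed
    also have "\<dots> = ennreal \<Lambda>" unfolding \<Lambda>_def
      by (rule suminf_ennreal2) (use slam lam_pos in \<open>auto simp: less_imp_le\<close>)
    finally show ?thesis .
  qed
  have gfin: "AE \<omega> in M. summable (\<lambda>k. lam k * (Z k \<omega>)\<^sup>2)"
  proof -
    have "(\<integral>\<^sup>+\<omega>. g \<omega> \<partial>M) < top" using gint ennreal_less_top by (rule le_less_trans)
    then have "(\<integral>\<^sup>+\<omega>. g \<omega> \<partial>M) \<noteq> \<infinity>" by (simp add: less_top)
    then have "AE \<omega> in M. g \<omega> \<noteq> \<infinity>" by (intro nn_integral_PInf_AE) auto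
    then show ?thesis
      by eventually_elim (rule summable_suminf_not_top, use lam_pos in \<open>auto simp: g_def less_imp_le\<close>)
  qed
  have gval: "AE \<omega> in M. g \<omega> = ennreal (\<Sum>k. lam k * (Z k \<omega>)\<^sup>2)"
    using gfin by eventually_elim (simp add: g_def suminf_ennreal2 less_imp_le[OF lam_pos])
  show ?thesis
  proof (intro conjI allI impI, goal_cases)
    case (1 Ms a b)
    then have eta: "\<eta> > 1 + 1 / \<beta>" and a: "a > 0" and b: "b > 0"
      and bnd: "\<And>n. n \<ge> 1 \<Longrightarrow> a * real n powr (1 / (\<eta> * \<beta>)) \<le> real (Ms n) \<and> real (Ms n) \<le> b * real n powr (1 / 3)"
      by auto
    have \<eta>0: "\<eta> > 0" using eta beta_gt by (smt (verit) divide_pos_pos)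
    define K where "K = 8 * \<tau>\<^sup>2 + 16 * b ^ 3 * \<tau>\<^sup>2 / \<epsilon>\<^sup>2 + c2 powr \<eta> * a powr (- \<beta> * \<eta>) * R"
    show ?case
    proof (intro exI allI impI)
      fix n :: nat assume n: "n \<ge> 1"
      define m where "m = Ms n"
      define B where "B = 2 * real m * \<tau> / (real n * \<epsilon>)"
      define Tl where "Tl = (\<Sum>j. if j \<ge> m then (\<mu>0 \<bullet> \<phi> j)\<^sup>2 else 0)"
      have sTl: "summable (\<lambda>k. if k \<ge> m then (\<mu>0 \<bullet> \<phi> k)\<^sup>2 else 0)"
        by (rule summable_comparison_test'[OF coeff_summable[OF onb, of \<mu>0], of 0]) auto
      have Tl0: "0 \<le> Tl" unfolding Tl_def by (intro suminf_nonneg sTl) auto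
      have pt: "AE \<omega> in M. ennreal ((norm (frl_est \<phi> \<tau> \<epsilon> X W0 n (Ms n) \<omega> - \<mu>0))\<^sup>2)
          \<le> ennreal (2 * (norm (Xbar X n \<omega> - \<mu>0))\<^sup>2) + ennreal Tl + ennreal (2 * B\<^sup>2) * (\<Sum>j<m. ennreal ((W0 j \<omega>)\<^sup>2))"
      proof (rule AE_I2)
        fix \<omega>
        have eq: "frl_est \<phi> \<tau> \<epsilon> X W0 n (Ms n) \<omega> = (\<Sum>j<m. (Xbar X n \<omega> \<bullet> \<phi> j + B * W0 j \<omega>) *\<^sub>R \<phi> j)"
          by (simp add: frl_est_def B_def m_def)
        have "(norm (frl_est \<phi> \<tau> \<epsilon> X W0 n (Ms n) \<omega> - \<mu>0))\<^sup>2
            \<le> 2 * (norm (Xbar X n \<omega> - \<mu>0))\<^sup>2 + 2 * B\<^sup>2 * (\<Sum>j<m. (W0 j \<omega>)\<^sup>2) + Tl"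
          unfolding eq Tl_def by (rule frl_pointwise[OF onb])
        then have "ennreal ((norm (frl_est \<phi> \<tau> \<epsilon> X W0 n (Ms n) \<omega> - \<mu>0))\<^sup>2)
            \<le> ennreal (2 * (norm (Xbar X n \<omega> - \<mu>0))\<^sup>2 + Tl + 2 * B\<^sup>2 * (\<Sum>j<m. (W0 j \<omega>)\<^sup>2))"
          by (intro ennreal_leI) simp
        also have "\<dots> = ennreal (2 * (norm (Xbar X n \<omega> - \<mu>0))\<^sup>2) + ennreal Tl + ennreal (2 * B\<^sup>2) * (\<Sum>j<m. ennreal ((W0 j \<omega>)\<^sup>2))"
          using Tl0 by (simp add: ennreal_mult sum_nonneg)
        finally show "ennreal ((norm (frl_est \<phi> \<tau> \<epsilon> X W0 n (Ms n) \<omega> - \<mu>0))\<^sup>2)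
          \<le> ennreal (2 * (norm (Xbar X n \<omega> - \<mu>0))\<^sup>2) + ennreal Tl + ennreal (2 * B\<^sup>2) * (\<Sum>j<m. ennreal ((W0 j \<omega>)\<^sup>2))" .
      qed
      have G: "(\<integral>\<^sup>+\<omega>. (\<Sum>j<m. ennreal ((W0 j \<omega>)\<^sup>2)) \<partial>M) \<le> ennreal (2 * real m)"
      proof -
        have "(\<integral>\<^sup>+\<omega>. (\<Sum>j<m. ennreal ((W0 j \<omega>)\<^sup>2)) \<partial>M) = (\<Sum>j<m. \<integral>\<^sup>+\<omega>. ennreal ((W0 j \<omega>)\<^sup>2) \<partial>M)"
          by (rule nn_integral_sum) auto
        also have "\<dots> \<le> (\<Sum>j<m. ennreal 2)" by (intro sum_mono Wm)
        also have "\<dots> = ennreal (2 * real m)" by (simp add: ennreal_of_nat_eq_real_of_nat ennreal_mult mult.commute)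
        finally show ?thesis .
      qed
      have bound: "(\<integral>\<^sup>+\<omega>. ennreal ((norm (frl_est \<phi> \<tau> \<epsilon> X W0 n (Ms n) \<omega> - \<mu>0))\<^sup>2) \<partial>M)
          \<le> ennreal (2 * (4 * \<tau>\<^sup>2 / real n) + Tl + 2 * B\<^sup>2 * (2 * real m))"
        by (rule nn3[OF _ _ _ pt xb[OF n] G]) (use Tl0 in auto)
      have r1: "real n * Tl \<le> c2 powr \<eta> * a powr (- \<beta> * \<eta>) * R"
      proof -
        have "Tl \<le> lam m powr \<eta> * R" unfolding Tl_def R_def
          by (rule tail_bound[OF onb lam_pos lam_mono \<eta>0 reg])
        then have "real n * Tl \<le> (real n * lam m powr \<eta>) * R" by (simp add: mult_left_mono mult.assoc)
        also have "\<dots> \<le> (c2 powr \<eta> * a powr (- \<beta> * \<eta>)) * R"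
          by (intro mult_right_mono frl_real2[OF c2_pos a \<eta>0 _ n lam_upper lam_pos] R0)
             (use beta_gt bnd[OF n] in \<open>auto simp: m_def\<close>)
        finally show ?thesis .
      qed
      have r2: "real n * (2 * B\<^sup>2 * (2 * real m)) \<le> 16 * b ^ 3 * \<tau>\<^sup>2 / \<epsilon>\<^sup>2"
      proof -
        have m3: "real m ^ 3 \<le> b ^ 3 * real n" by (rule frl_real1[OF b n]) (use bnd[OF n] in \<open>auto simp: m_def\<close>)
        have "real n * (2 * B\<^sup>2 * (2 * real m)) = 16 * \<tau>\<^sup>2 / \<epsilon>\<^sup>2 * (real m ^ 3 / real n)"
          using n eps_pos by (simp add: B_def power2_eq_square power3_eq_cube field_simps)
        also have "\<dots> \<le> 16 * \<tau>\<^sup>2 / \<epsilon>\<^sup>2 * b ^ 3"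
          by (intro mult_left_mono) (use m3 n in \<open>auto simp: divide_le_eq\<close>)
        finally show ?thesis by (simp add: mult_ac)
      qed
      have "ennreal (real n) * (\<integral>\<^sup>+\<omega>. ennreal ((norm (frl_est \<phi> \<tau> \<epsilon> X W0 n (Ms n) \<omega> - \<mu>0))\<^sup>2) \<partial>M)
          \<le> ennreal (real n) * ennreal (2 * (4 * \<tau>\<^sup>2 / real n) + Tl + 2 * B\<^sup>2 * (2 * real m))"
        by (intro mult_left_mono bound) auto
      also have "\<dots> = ennreal (real n * (2 * (4 * \<tau>\<^sup>2 / real n) + Tl + 2 * B\<^sup>2 * (2 * real m)))"
        using Tl0 by (simp add: ennreal_mult)
      also have "\<dots> \<le> ennreal K"
      proof (intro ennreal_leI)
        have "real n * (2 * (4 * \<tau>\<^sup>2 / real n) + Tl + 2 * B\<^sup>2 * (2 * real m))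
            = 8 * \<tau>\<^sup>2 + real n * Tl + real n * (2 * B\<^sup>2 * (2 * real m))"
          using n by (simp add: field_simps)
        then show "real n * (2 * (4 * \<tau>\<^sup>2 / real n) + Tl + 2 * B\<^sup>2 * (2 * real m)) \<le> K"
          unfolding K_def using r1 r2 by linarith
      qed
      finally show "ennreal (real n) * (\<integral>\<^sup>+\<omega>. ennreal ((norm (frl_est \<phi> \<tau> \<epsilon> X W0 n (Ms n) \<omega> - \<mu>0))\<^sup>2) \<partial>M) \<le> ennreal K" .
    qed
  next
    case (2 \<psi>s a b)
    then have eta: "\<eta> \<ge> 1 + 2 / \<beta>" and a: "a > 0" and b: "b > 0"
      and bnd: "\<And>n. n \<ge> 1 \<Longrightarrow> 0 < \<psi>s n \<and> \<psi>s n \<le> 1 \<and>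
                 a * (real n * \<epsilon>\<^sup>2) powr (- \<eta> * \<beta> / (\<beta> + 2)) \<le> \<psi>s n \<and> \<psi>s n \<le> b * real n powr (-1)"
      by auto
    have be: "\<beta> * \<eta> \<ge> \<beta> + 2"
    proof -
      have "\<beta> * \<eta> \<ge> \<beta> * (1 + 2 / \<beta>)" by (rule mult_left_mono[OF eta]) (use beta_gt in auto)
      also have "\<beta> * (1 + 2 / \<beta>) = \<beta> + 2" using beta_gt by (simp add: field_simps)
      finally show ?thesis .
    qed
    have \<eta>0: "\<eta> > 0" using be beta_gt by (smt (verit) mult_nonneg_nonpos)
    have \<gamma>: "\<beta> * (\<eta> - 1/2) > 1" using be beta_gt by (simp add: right_diff_distrib)
    define E where "E = (1 + \<beta>/2) / (\<beta> * \<eta>)"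
    define Cs where "Cs = c1 powr (-1/2) * 2 powr (1 + \<beta>/2) + c2 powr (\<eta> - 1/2) / (\<beta> * (\<eta> - 1/2) - 1)"
    have E0: "E \<ge> 0" unfolding E_def using beta_gt \<eta>0 by simp
    define K where "K = 12 * \<tau>\<^sup>2 + 3 * b * R + 3 * (8 * \<tau>\<^sup>2 * (Cs\<^sup>2 * a powr (- 2 * E))) * \<Lambda>"
    show ?case
    proof (intro exI allI impI)
      fix n :: nat assume n: "n \<ge> 1"
      define \<psi> where "\<psi> = \<psi>s n"
      have \<psi>: "0 < \<psi>" "\<psi> \<le> 1" "a * (real n * \<epsilon>\<^sup>2) powr (- (\<eta> * \<beta> / (\<beta> + 2))) \<le> \<psi>" "\<psi> \<le> b * real n powr (-1)"
        using bnd[OF n] by (auto simp: \<psi>_def)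
      define S where "S = (\<Sum>j. lam j powr (\<eta> - 1/2) / (lam j powr \<eta> + \<psi>))"
      have SS: "summable (\<lambda>j. lam j powr (\<eta> - 1/2) / (lam j powr \<eta> + \<psi>))"
        and Sle: "S \<le> Cs * \<psi> powr (- E)"
        using S_bound[OF lam_pos c1_pos c2_pos beta_gt \<eta>0 \<gamma> lam_lower lam_upper \<psi>(1,2)]
        by (simp_all add: S_def Cs_def E_def)
      have S0: "0 \<le> S" unfolding S_def by (intro suminf_nonneg SS) (use \<psi> in simp)
      define \<sigma> where "\<sigma> = sqrt 2 * delta_qr lam \<eta> \<psi> \<tau> n / \<epsilon>"
      have sig: "real n * \<sigma>\<^sup>2 = 8 * \<tau>\<^sup>2 * S\<^sup>2 / (real n * \<epsilon>\<^sup>2)"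
        using n eps_pos by (simp add: \<sigma>_def delta_qr_def S_def power_mult_distrib power_divide field_simps power2_eq_square)
      have S2: "S\<^sup>2 \<le> Cs\<^sup>2 * a powr (- 2 * E) * (real n * \<epsilon>\<^sup>2)"
      proof (rule qr_real[OF S0 Sle E0 \<psi>(1) a _ \<psi>(3)])
        show "0 < real n * \<epsilon>\<^sup>2" using n eps_pos by simp
        have pp: "0 < \<beta> * (\<eta> * 4) + \<beta> * (\<beta> * (\<eta> * 2))" using beta_gt \<eta>0 by (intro add_pos_pos mult_pos_pos) auto
        show "\<eta> * \<beta> / (\<beta> + 2) * (2 * E) = 1" unfolding E_def using beta_gt \<eta>0 pp by (simp add: field_simps)
      qed
      have nsig: "real n * \<sigma>\<^sup>2 \<le> 8 * \<tau>\<^sup>2 * (Cs\<^sup>2 * a powr (- 2 * E))"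
      proof -
        have pos: "real n * \<epsilon>\<^sup>2 > 0" using n eps_pos by simp
        have "S\<^sup>2 / (real n * \<epsilon>\<^sup>2) \<le> Cs\<^sup>2 * a powr (- 2 * E)"
          using S2 pos by (simp add: divide_le_eq)
        then have "8 * \<tau>\<^sup>2 * (S\<^sup>2 / (real n * \<epsilon>\<^sup>2)) \<le> 8 * \<tau>\<^sup>2 * (Cs\<^sup>2 * a powr (- 2 * E))"
          by (intro mult_left_mono) auto
        then show ?thesis unfolding sig by simp
      qed
      have pt: "AE \<omega> in M. ennreal ((norm (iclp_qr_est lam \<phi> \<eta> (\<psi>s n) \<tau> \<epsilon> X Z n \<omega> - \<mu>0))\<^sup>2)
          \<le> ennreal (3 * (norm (Xbar X n \<omega> - \<mu>0))\<^sup>2) + ennreal (3 * \<psi> * R) + ennreal (3 * \<sigma>\<^sup>2) * g \<omega>"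
        using gfin gval
      proof eventually_elim
        case (elim \<omega>)
        have "(norm (iclp_qr_est lam \<phi> \<eta> (\<psi>s n) \<tau> \<epsilon> X Z n \<omega> - \<mu>0))\<^sup>2
            \<le> 3 * (norm (Xbar X n \<omega> - \<mu>0))\<^sup>2 + 3 * \<psi> * R + 3 * \<sigma>\<^sup>2 * (\<Sum>k. lam k * (Z k \<omega>)\<^sup>2)"
          unfolding iclp_qr_est_def qr_est_def iclp_noise_def \<sigma>_def R_def \<psi>_def[symmetric]
          by (rule iclp_pointwise[OF onb lam_pos \<psi>(1) elim(1) reg])
        then have "ennreal ((norm (iclp_qr_est lam \<phi> \<eta> (\<psi>s n) \<tau> \<epsilon> X Z n \<omega> - \<mu>0))\<^sup>2)
            \<le> ennreal (3 * (norm (Xbar X n \<omega> - \<mu>0))\<^sup>2 + 3 * \<psi> * R + 3 * \<sigma>\<^sup>2 * (\<Sum>k. lam k * (Z k \<omega>)\<^sup>2))"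
          by (intro ennreal_leI)
        also have "\<dots> = ennreal (3 * (norm (Xbar X n \<omega> - \<mu>0))\<^sup>2) + ennreal (3 * \<psi> * R) + ennreal (3 * \<sigma>\<^sup>2) * g \<omega>"
        proof -
          have "0 \<le> (\<Sum>k. lam k * (Z k \<omega>)\<^sup>2)" by (intro suminf_nonneg elim(1)) (simp add: less_imp_le[OF lam_pos])
          then show ?thesis using \<psi> R0 by (simp add: elim(2) ennreal_mult)
        qed
        finally show ?case .
      qed
      have bound: "(\<integral>\<^sup>+\<omega>. ennreal ((norm (iclp_qr_est lam \<phi> \<eta> (\<psi>s n) \<tau> \<epsilon> X Z n \<omega> - \<mu>0))\<^sup>2) \<partial>M)
          \<le> ennreal (3 * (4 * \<tau>\<^sup>2 / real n) + 3 * \<psi> * R + 3 * \<sigma>\<^sup>2 * \<Lambda>)"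
        by (rule nn3[OF _ _ _ pt xb[OF n] gint]) (use \<psi> R0 L0 in auto)
      have npsi: "real n * \<psi> \<le> b"
      proof -
        have "real n * \<psi> \<le> real n * (b * real n powr (-1))" using \<psi>(4) by (intro mult_left_mono) auto
        also have "\<dots> = b" using n by (simp add: powr_minus)
        finally show ?thesis .
      qed
      have "ennreal (real n) * (\<integral>\<^sup>+\<omega>. ennreal ((norm (iclp_qr_est lam \<phi> \<eta> (\<psi>s n) \<tau> \<epsilon> X Z n \<omega> - \<mu>0))\<^sup>2) \<partial>M)
          \<le> ennreal (real n) * ennreal (3 * (4 * \<tau>\<^sup>2 / real n) + 3 * \<psi> * R + 3 * \<sigma>\<^sup>2 * \<Lambda>)"
        by (intro mult_left_mono bound) auto
      also have "\<dots> = ennreal (real n * (3 * (4 * \<tau>\<^sup>2 / real n) + 3 * \<psi> * R + 3 * \<sigma>\<^sup>2 * \<Lambda>))"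
        using \<psi> R0 L0 by (simp add: ennreal_mult)
      also have "\<dots> \<le> ennreal K"
      proof (intro ennreal_leI)
        have e: "real n * (3 * (4 * \<tau>\<^sup>2 / real n) + 3 * \<psi> * R + 3 * \<sigma>\<^sup>2 * \<Lambda>)
            = 12 * \<tau>\<^sup>2 + 3 * (real n * \<psi>) * R + 3 * (real n * \<sigma>\<^sup>2) * \<Lambda>"
          using n by (simp add: field_simps)
        have "3 * (real n * \<psi>) * R \<le> 3 * b * R" using npsi R0 by (simp add: mult_right_mono)
        moreover have "3 * (real n * \<sigma>\<^sup>2) * \<Lambda> \<le> 3 * (8 * \<tau>\<^sup>2 * (Cs\<^sup>2 * a powr (- 2 * E))) * \<Lambda>"
        proof -
          have h: "(real n * \<sigma>\<^sup>2) * \<Lambda> \<le> (8 * \<tau>\<^sup>2 * (Cs\<^sup>2 * a powr (- 2 * E))) * \<Lambda>"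
            by (rule mult_right_mono[OF nsig L0])
          then show ?thesis by (simp add: mult_ac)
        qed
        ultimately show "real n * (3 * (4 * \<tau>\<^sup>2 / real n) + 3 * \<psi> * R + 3 * \<sigma>\<^sup>2 * \<Lambda>) \<le> K"
          unfolding e K_def by linarith
      qed
      finally show "ennreal (real n) * (\<integral>\<^sup>+\<omega>. ennreal ((norm (iclp_qr_est lam \<phi> \<eta> (\<psi>s n) \<tau> \<epsilon> X Z n \<omega> - \<mu>0))\<^sup>2) \<partial>M) \<le> ennreal K" .
    qed
  next
    case 3
    then have eta: "\<eta> > 1 + 2 / \<beta>" by simp
    have be: "\<beta> * \<eta> > \<beta> + 2"
    proof -
      have "\<beta> * \<eta> > \<beta> * (1 + 2 / \<beta>)" by (rule mult_strict_left_mono[OF eta]) (use beta_gt in auto)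
      also have "\<beta> * (1 + 2 / \<beta>) = \<beta> + 2" using beta_gt by (simp add: field_simps)
      finally show ?thesis .
    qed
    have \<eta>0: "\<eta> > 0" using be beta_gt by (smt (verit) mult_nonneg_nonpos)
    have \<gamma>: "\<beta> * (\<eta> - 1/2) > 1" using be beta_gt by (simp add: right_diff_distrib)
    define E where "E = (1 + \<beta>/2) / (\<beta> * \<eta>)"
    define Cs where "Cs = c1 powr (-1/2) * 2 powr (1 + \<beta>/2) + c2 powr (\<eta> - 1/2) / (\<beta> * (\<eta> - 1/2) - 1)"
    have E1: "2 * E - 1 < 0" unfolding E_def using be beta_gt \<eta>0 by (simp add: field_simps)
    define C where "C = 8 * \<tau>\<^sup>2 * Cs\<^sup>2 / \<epsilon>\<^sup>2 * \<Lambda>"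
    let ?u = "\<lambda>n. ennreal (real n) *
            (\<integral>\<^sup>+\<omega>. ennreal ((norm (iclp_qr_est lam \<phi> \<eta> (1 / real n) \<tau> \<epsilon> X Z n \<omega>
                                     - qr_est lam \<phi> \<eta> (1 / real n) X n \<omega>))\<^sup>2) \<partial>M)"
    have ub: "?u n \<le> ennreal (C * real n powr (2 * E - 1))" if n: "n \<ge> 1" for n
    proof -
      define \<psi> where "\<psi> = 1 / real n"
      have \<psi>: "0 < \<psi>" "\<psi> \<le> 1" using n by (auto simp: \<psi>_def)
      define S where "S = (\<Sum>j. lam j powr (\<eta> - 1/2) / (lam j powr \<eta> + \<psi>))"
      have SS: "summable (\<lambda>j. lam j powr (\<eta> - 1/2) / (lam j powr \<eta> + \<psi>))"
        and Sle: "S \<le> Cs * \<psi> powr (- E)"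
        using S_bound[OF lam_pos c1_pos c2_pos beta_gt \<eta>0 \<gamma> lam_lower lam_upper \<psi>(1,2)]
        by (simp_all add: S_def Cs_def E_def)
      have S0: "0 \<le> S" unfolding S_def by (intro suminf_nonneg SS) (use \<psi> in simp)
      define \<sigma> where "\<sigma> = sqrt 2 * delta_qr lam \<eta> \<psi> \<tau> n / \<epsilon>"
      have sig: "real n * \<sigma>\<^sup>2 = 8 * \<tau>\<^sup>2 * S\<^sup>2 / (real n * \<epsilon>\<^sup>2)"
        using n eps_pos by (simp add: \<sigma>_def delta_qr_def S_def power_mult_distrib power_divide field_simps power2_eq_square)
      have S2: "S\<^sup>2 \<le> Cs\<^sup>2 * real n powr (2 * E)"
        by (rule mor_real[OF S0 _ n]) (use Sle in \<open>simp add: \<psi>_def\<close>)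
      have nsig: "real n * \<sigma>\<^sup>2 \<le> 8 * \<tau>\<^sup>2 * Cs\<^sup>2 / \<epsilon>\<^sup>2 * real n powr (2 * E - 1)"
      proof -
        have a1: "real n * \<sigma>\<^sup>2 = 8 * \<tau>\<^sup>2 / \<epsilon>\<^sup>2 * (S\<^sup>2 / real n)"
          unfolding sig using n eps_pos by (simp add: field_simps)
        have a2: "S\<^sup>2 / real n \<le> Cs\<^sup>2 * real n powr (2 * E) / real n"
          using S2 n by (simp add: divide_right_mono)
        have a3: "Cs\<^sup>2 * real n powr (2 * E) / real n = Cs\<^sup>2 * real n powr (2 * E - 1)"
          using n by (simp add: powr_diff)
        have "real n * \<sigma>\<^sup>2 \<le> 8 * \<tau>\<^sup>2 / \<epsilon>\<^sup>2 * (Cs\<^sup>2 * real n powr (2 * E - 1))"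
          unfolding a1 a3[symmetric] by (intro mult_left_mono a2) auto
        also have "\<dots> = 8 * \<tau>\<^sup>2 * Cs\<^sup>2 / \<epsilon>\<^sup>2 * real n powr (2 * E - 1)" by simp
        finally show ?thesis .
      qed
      have pt: "AE \<omega> in M. ennreal ((norm (iclp_qr_est lam \<phi> \<eta> (1 / real n) \<tau> \<epsilon> X Z n \<omega>
                                     - qr_est lam \<phi> \<eta> (1 / real n) X n \<omega>))\<^sup>2)
          \<le> ennreal (0 * (norm (Xbar X n \<omega> - \<mu>0))\<^sup>2) + ennreal 0 + ennreal (\<sigma>\<^sup>2) * g \<omega>"
        using gfin gval
      proof eventually_elim
        case (elim \<omega>)
        have "iclp_qr_est lam \<phi> \<eta> (1 / real n) \<tau> \<epsilon> X Z n \<omega> - qr_est lam \<phi> \<eta> (1 / real n) X n \<omega>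
            = \<sigma> *\<^sub>R (\<Sum>k. (sqrt (lam k) * Z k \<omega>) *\<^sub>R \<phi> k)"
          by (simp add: iclp_qr_est_def iclp_noise_def \<sigma>_def \<psi>_def)
        then have "(norm (iclp_qr_est lam \<phi> \<eta> (1 / real n) \<tau> \<epsilon> X Z n \<omega> - qr_est lam \<phi> \<eta> (1 / real n) X n \<omega>))\<^sup>2
            = \<sigma>\<^sup>2 * (\<Sum>k. lam k * (Z k \<omega>)\<^sup>2)"
          by (simp add: power_mult_distrib noise_norm[OF onb lam_pos elim(1)])
        moreover have "0 \<le> (\<Sum>k. lam k * (Z k \<omega>)\<^sup>2)" by (intro suminf_nonneg elim(1)) (simp add: less_imp_le[OF lam_pos])
        ultimately show ?case by (simp add: elim(2) ennreal_mult)
      qed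
      have bound: "(\<integral>\<^sup>+\<omega>. ennreal ((norm (iclp_qr_est lam \<phi> \<eta> (1 / real n) \<tau> \<epsilon> X Z n \<omega>
                                     - qr_est lam \<phi> \<eta> (1 / real n) X n \<omega>))\<^sup>2) \<partial>M)
          \<le> ennreal (0 * (4 * \<tau>\<^sup>2 / real n) + 0 + \<sigma>\<^sup>2 * \<Lambda>)"
        by (rule nn3[OF _ _ _ pt xb[OF n] gint]) (use L0 in auto)
      have "?u n \<le> ennreal (real n) * ennreal (\<sigma>\<^sup>2 * \<Lambda>)"
        using bound by (intro mult_left_mono) auto
      also have "\<dots> = ennreal ((real n * \<sigma>\<^sup>2) * \<Lambda>)" using L0 by (simp add: ennreal_mult mult.assoc)
      also have "\<dots> \<le> ennreal (C * real n powr (2 * E - 1))"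
        using mult_right_mono[OF nsig L0] by (intro ennreal_leI) (simp add: C_def mult_ac)
      finally show ?thesis .
    qed
    have lim: "(\<lambda>n. ennreal (C * real n powr (2 * E - 1))) \<longlonglongrightarrow> 0"
    proof -
      have "(\<lambda>n. real n powr (2 * E - 1)) \<longlonglongrightarrow> 0"
        by (rule tendsto_neg_powr[OF E1 filterlim_real_sequentially])
      then have "(\<lambda>n. C * real n powr (2 * E - 1)) \<longlonglongrightarrow> C * 0" by (intro tendsto_mult tendsto_const)
      then have "(\<lambda>n. ennreal (C * real n powr (2 * E - 1))) \<longlonglongrightarrow> ennreal 0" by (intro tendsto_ennrealI) simp
      then show ?thesis by simp
    qed
    show ?case
    proof (rule tendsto_sandwich[OF _ _ tendsto_const lim])
      show "\<forall>\<^sub>F n in sequentially. (0::ennreal) \<le> ?u n" by simp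
      show "\<forall>\<^sub>F n in sequentially. ?u n \<le> ennreal (C * real n powr (2 * E - 1))"
        using eventually_ge_at_top[of 1] by eventually_elim (rule ub)
    qed
  qed
qed

end
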